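(* Let $q$ be a prime power, let $\mathcal{H}_q$ be the Hermitian curve over $\mathbb{F}_{q^2}$, of genus $g(\mathcal{H}_q)=\frac{q(q-1)}{2}$, and let $X,T$ be fixed positive integers (security and privacy parameters). Let $L$ be an integer with $g(\mathcal{H}_q)\le L\le q^3-g(\mathcal{H}_q)$ and $L+g(\mathcal{H}_q)\equiv 0\pmod q$, and set $m=\frac{L+g(\mathcal{H}_q)}{q}$. Let $\alpha_1,\dots,\alpha_m\in\mathbb{F}_{q^2}\setminus\{0\}$ be pairwise distinct and let $P_{i,z}=(\alpha_i,\beta_{i,z})$, $i\in[m]$, $z\in[q]$, be $mq$ (distinct) affine $\mathbb{F}_{q^2}$-rational points of $\mathcal{H}_q$. If there exist $L+X+T+\frac{7q^2-3q-6}{2}+1$ $\mathbb{F}_{q^2}$-rational points of $\mathcal{H}_q$ distinct from $P_\infty$, $P_0$ and all $P_{i,z}$, then, with $N=L+X+T+3q^2-q-2$ servers, there exists an $X$-secure and $T$-private information retrieval scheme over $\mathbb{F}_{q^2}$ with rate $$\mathcal{R}^{\mathcal{H}_q}=\frac{L}{N}=1-\frac{X+T+3q^2-q-2}{N}.$$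
   Context: The Hermitian curve $\mathcal{H}_q$ is the projective non-singular curve over $\mathbb{F}_{q^2}$ with affine equation $X^{q+1}=Y^q+Y$; it has $q^3+1$ $\mathbb{F}_{q^2}$-rational points, $P_\infty$ denotes its unique point at infinity and $P_0=(0,0)$. $[n]=\{1,\dots,n\}$. An $X$-secure and $T$-private information retrieval (XSTPIR) scheme with $N$ servers: $N$ non-communicating servers store (encoded) data about $M$ independent files $s_1,\dots,s_M\in\mathbb{F}_{q^2}^L$; a user wishing to retrieve $s_\mu$ sends a query $Q_n$ to server $n$, which returns an answer $A_n$; the user must be able to recover $s_\mu$ from $A_1,\dots,A_N$; $X$-security means the data stored at any $X$ servers reveals nothing about the file contents; $T$-privacy means the queries sent to any $T$ servers reveal nothing about the index $\mu$. The rate is the ratio between the size of the desired file and the total amount of downloaded data; here it equals $L/N$ (one symbol downloaded from each server). *)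

theory Defs
  imports "HOL-Probability.Probability_Mass_Function"
begin

text \<open>Affine points of the Hermitian curve X^(q+1) = Y^q + Y over a field of order q^2
  (the field is the type 'a). The unique point at infinity is not affine.\<close>
definition hermitian_affine :: "nat \<Rightarrow> ('a::{finite,field} \<times> 'a) set" where
  "hermitian_affine q = {(x, y). x ^ (q + 1) = y ^ q + y}"

definition valid_files :: "nat \<Rightarrow> nat \<Rightarrow> (nat \<Rightarrow> 'a list) \<Rightarrow> bool" where
  "valid_files M L D \<longleftrightarrow> (\<forall>i\<in>{1..M}. length (D i) = L) \<and> (\<forall>i. i \<notin> {1..M} \<longrightarrow> D i = [])"

text \<open>An X-secure, T-private information retrieval scheme with N servers, M files of
  length L over the field 'a, in which each server returns exactly one symbol.
  srand: distribution of the storage randomness; store n D r: data stored at server n;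
  qrand: distribution of the user's private randomness; query n mu u: query to server n;
  answer n w Q: the one-symbol answer of server n from its storage w and query Q;
  decode mu u As: the user's decoder from the list of the N answers.
  Correctness is zero-error; X-security: the joint distribution of the stored data of any
  at most X servers does not depend on the files; T-privacy: the joint distribution of the
  queries to any at most T servers does not depend on the desired index.\<close>
definition XSTPIR ::
  "nat \<Rightarrow> nat \<Rightarrow> nat \<Rightarrow> nat \<Rightarrow> nat \<Rightarrow>
   'a list pmf \<Rightarrow> (nat \<Rightarrow> (nat \<Rightarrow> 'a list) \<Rightarrow> 'a list \<Rightarrow> 'a list) \<Rightarrow>
   'a list pmf \<Rightarrow> (nat \<Rightarrow> nat \<Rightarrow> 'a list \<Rightarrow> 'a list) \<Rightarrow>
   (nat \<Rightarrow> 'a list \<Rightarrow> 'a list \<Rightarrow> 'a) \<Rightarrow> (nat \<Rightarrow> 'a list \<Rightarrow> 'a list \<Rightarrow> 'a list) \<Rightarrow> bool" where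
  "XSTPIR N M L X T srand store qrand query answer decode \<longleftrightarrow>
     (\<forall>D mu r u. valid_files M L D \<and> mu \<in> {1..M} \<and> r \<in> set_pmf srand \<and> u \<in> set_pmf qrand \<longrightarrow>
        decode mu u (map (\<lambda>n. answer n (store n D r) (query n mu u)) [1..<N+1]) = D mu)
   \<and> (\<forall>S D D'. S \<subseteq> {1..N} \<and> card S \<le> X \<and> valid_files M L D \<and> valid_files M L D' \<longrightarrow>
        map_pmf (\<lambda>r n. if n \<in> S then store n D r else []) srand =
        map_pmf (\<lambda>r n. if n \<in> S then store n D' r else []) srand)
   \<and> (\<forall>S mu mu'. S \<subseteq> {1..N} \<and> card S \<le> T \<and> mu \<in> {1..M} \<and> mu' \<in> {1..M} \<longrightarrow>
        map_pmf (\<lambda>u n. if n \<in> S then query n mu u else []) qrand =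
        map_pmf (\<lambda>u n. if n \<in> S then query n mu' u else []) qrand)"

end

theory Submission
  imports Defs "HOL-Computational_Algebra.Polynomial" "HOL-Computational_Algebra.Primes"
begin

lemma card_pow_eq_le:
  fixes c :: "'a::field"
  assumes "0 < a"
  shows "card {x. x ^ a = c} \<le> a"
proof -
  let ?p = "monom 1 a + [:- c:]"
  have deg: "degree ?p = a" using assms by (simp add: degree_add_eq_left degree_monom_eq)
  hence "?p \<noteq> 0" using assms by auto
  hence "card {x. poly ?p x = 0} \<le> degree ?p" by (rule card_poly_roots_bound)
  moreover have "{x. poly ?p x = 0} = {x. x ^ a = c}" by (auto simp: poly_monom)
  ultimately show ?thesis using deg by simp
qed

lemma card_trace_eq_le:
  fixes c :: "'a::field"
  assumes "1 < q"
  shows "card {y. y ^ q + y = c} \<le> q"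
proof -
  let ?p = "monom 1 q + [:- c, 1:]"
  have deg: "degree ?p = q" using assms by (simp add: degree_add_eq_left degree_monom_eq)
  hence "?p \<noteq> 0" using assms by auto
  hence "card {x. poly ?p x = 0} \<le> degree ?p" by (rule card_poly_roots_bound)
  moreover have "{x. poly ?p x = 0} = {y. y ^ q + y = c}" by (auto simp: poly_monom algebra_simps)
  ultimately show ?thesis using deg by simp
qed

lemma card_frob_fix_le:
  assumes "1 < q"
  shows "card {y::'a::field. y ^ q = y} \<le> q"
proof -
  let ?p = "monom (1::'a) q + [:0, - 1:]"
  have deg: "degree ?p = q" using assms by (simp add: degree_add_eq_left degree_monom_eq)
  hence "?p \<noteq> 0" using assms by auto
  hence "card {x. poly ?p x = 0} \<le> degree ?p" by (rule card_poly_roots_bound)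
  moreover have "{x. poly ?p x = 0} = {y::'a. y ^ q = y}" by (auto simp: poly_monom algebra_simps)
  ultimately show ?thesis using deg by simp
qed

lemma of_nat_card_eq_0: "of_nat CARD('a::{finite,ring_1}) = (0::'a)"
proof -
  have "(\<Sum>c\<in>UNIV. c + (1::'a)) = (\<Sum>c\<in>UNIV. c)"
    by (rule sum.reindex_bij_witness[where i="\<lambda>c. c - 1" and j="\<lambda>c. c + 1"]) auto
  thus ?thesis by (simp add: sum.distrib)
qed

lemma pow_card_minus1:
  fixes x :: "'a::{finite,field}"
  assumes "x \<noteq> 0"
  shows "x ^ (CARD('a) - 1) = 1"
proof -
  let ?U = "UNIV - {0::'a}"
  have "(\<Prod>c\<in>?U. x * c) = (\<Prod>c\<in>?U. c)"
    by (rule prod.reindex_bij_witness[where i="\<lambda>c. c / x" and j="\<lambda>c. x * c"]) (use assms in auto)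
  moreover have "(\<Prod>c\<in>?U. x * c) = x ^ card ?U * (\<Prod>c\<in>?U. c)"
    by (simp add: prod.distrib)
  moreover have "(\<Prod>c\<in>?U. c) \<noteq> 0" by simp
  moreover have "card ?U = CARD('a) - 1" by (simp add: card_Diff_singleton)
  ultimately show ?thesis by simp
qed

lemma pow_card:
  fixes x :: "'a::{finite,field}"
  shows "x ^ CARD('a) = x"
proof (cases "x = 0")
  case True thus ?thesis by simp
next
  case False
  have "CARD('a) = Suc (CARD('a) - 1)" using finite_UNIV_card_ge_0[where 'a='a] by simp
  hence "x ^ CARD('a) = x * x ^ (CARD('a) - 1)" by (metis power_Suc)
  thus ?thesis using pow_card_minus1[OF False] by simp
qed

lemma sum_pow_UNIV:
  assumes "a < CARD('a::{finite,field}) - 1"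
  shows "(\<Sum>c::'a\<in>UNIV. c ^ a) = 0"
proof (cases "a = 0")
  case True thus ?thesis using of_nat_card_eq_0[where 'a='a] by simp
next
  case False
  have "card {x::'a. x ^ a = 1} \<le> a" using False by (intro card_pow_eq_le) auto
  also have "a < card (UNIV - {0::'a})" using assms by (simp add: card_Diff_singleton)
  finally have "\<not> (UNIV - {0::'a}) \<subseteq> {x. x ^ a = 1}"
    by (metis card_mono finite_Collect_subsets finite_class.finite_UNIV finite_subset leD subset_UNIV)
  then obtain g :: 'a where g: "g \<noteq> 0" "g ^ a \<noteq> 1" by auto
  have "(\<Sum>c\<in>UNIV. (g * c) ^ a) = (\<Sum>c::'a\<in>UNIV. c ^ a)"
    by (rule sum.reindex_bij_witness[where i="\<lambda>c. c / g" and j="\<lambda>c. g * c"]) (use g in auto)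
  hence "g ^ a * (\<Sum>c::'a\<in>UNIV. c ^ a) = (\<Sum>c::'a\<in>UNIV. c ^ a)"
    by (simp add: power_mult_distrib sum_distrib_left)
  hence "(g ^ a - 1) * (\<Sum>c::'a\<in>UNIV. c ^ a) = 0" by (simp add: algebra_simps)
  thus ?thesis using g by simp
qed

lemma sum_pow_UNIV_top:
  shows "(\<Sum>c::'a::{finite,field}\<in>UNIV. c ^ (CARD('a) - 1)) = -1"
proof -
  have c2: "CARD('a) \<ge> 2" 
  proof -
    have "card {0::'a, 1} \<le> CARD('a)" by (rule card_mono) auto
    thus ?thesis by simp
  qed
  have "(\<Sum>c::'a\<in>UNIV. c ^ (CARD('a) - 1)) = (\<Sum>c\<in>insert 0 (UNIV - {0::'a}). c ^ (CARD('a) - 1))"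
    by (simp add: insert_UNIV)
  also have "\<dots> = 0 ^ (CARD('a) - 1) + (\<Sum>c\<in>UNIV - {0::'a}. c ^ (CARD('a) - 1))"
    by (subst sum.insert) auto
  also have "\<dots> = (\<Sum>c\<in>UNIV - {0::'a}. 1)"
  proof -
    have "0 ^ (CARD('a) - 1) = (0::'a)" using c2 by simp
    moreover have "(\<Sum>c\<in>UNIV - {0::'a}. c ^ (CARD('a) - 1)) = (\<Sum>c\<in>UNIV - {0::'a}. 1)"
      by (rule sum.cong) (use pow_card_minus1[where 'a='a] in blast)+
    ultimately show ?thesis by simp
  qed
  also have "\<dots> = of_nat (CARD('a) - 1)" by (simp add: card_Diff_singleton)
  also have "\<dots> = of_nat CARD('a) - 1" using c2 by (simp add: of_nat_diff)
  also have "\<dots> = -1" by (simp add: of_nat_card_eq_0)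
  finally show ?thesis .
qed

locale herm =
  fixes q :: nat and TY :: "'a::{finite,field} itself"
  assumes qpow: "\<exists>p k. prime p \<and> k > 0 \<and> q = p ^ k"
    and card: "CARD('a) = q ^ 2"
begin

lemma q_ge2: "q \<ge> 2"
proof -
  obtain p k where "prime p" "k > 0" "q = p ^ k" using qpow by auto
  moreover have "p \<ge> 2" using \<open>prime p\<close> prime_ge_2_nat by blast
  ultimately have "p ^ 1 \<le> p ^ k" by (intro power_increasing) auto
  thus ?thesis using \<open>p \<ge> 2\<close> \<open>q = p ^ k\<close> by simp
qed

lemma q_pos: "q > 0" using q_ge2 by simp

lemma ofq: "(of_nat q :: 'a) = 0"
proof -
  have "(of_nat q :: 'a) ^ 2 = of_nat (q ^ 2)" by simp
  also have "\<dots> = 0" using of_nat_card_eq_0[where 'a='a] card by simp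
  finally show ?thesis by simp
qed

lemma char_prime: "prime CHAR('a)" and q_char: "\<exists>k. q = CHAR('a) ^ k"
proof -
  obtain p k where pk: "prime p" "k > 0" "q = p ^ k" using qpow by auto
  have "(of_nat p :: 'a) ^ k = 0" using ofq pk by simp
  hence "(of_nat p :: 'a) = 0" by simp
  hence "CHAR('a) dvd p" using of_nat_eq_0_iff_char_dvd by blast
  moreover have "CHAR('a) \<noteq> 1" using CHAR_not_1[where 'a='a] by simp
  ultimately have "CHAR('a) = p" using pk(1) by (metis prime_nat_iff)
  thus "prime CHAR('a)" "\<exists>k. q = CHAR('a) ^ k" using pk by auto
qed

lemma frob_add: "((x::'a) + y) ^ q = x ^ q + y ^ q"
  using q_char char_prime freshmans_dream' by blast

lemma frob_diff: "((x::'a) - y) ^ q = x ^ q - y ^ q"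
  using frob_add[of "x - y" y] by (simp add: algebra_simps)

lemma frob_sum: "(\<Sum>i\<in>A. (f i::'a)) ^ q = (\<Sum>i\<in>A. f i ^ q)"
  using q_char char_prime freshmans_dream_sum' by blast

lemma pow_q2: "(x::'a) ^ (q ^ 2) = x" using pow_card[of x] card by simp

definition Fq :: "'a set" where "Fq = {z. z ^ q = z}"
definition fib :: "'a \<Rightarrow> 'a set" where "fib c = {y. y ^ q + y = c}"

lemma tr_in_Fq: "(y::'a) ^ q + y \<in> Fq"
proof -
  have "(y ^ q + y) ^ q = y ^ (q * q) + y ^ q" by (simp add: frob_add power_mult)
  also have "y ^ (q * q) = y" using pow_q2 by (simp add: power2_eq_square)
  finally show ?thesis unfolding Fq_def by (simp add: add.commute)
qed

lemma norm_in_Fq: "(x::'a) ^ (q + 1) \<in> Fq"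
proof -
  have "(x ^ (q + 1)) ^ q = x ^ (q * q) * x ^ q" by (simp add: power_mult[symmetric] algebra_simps power_add)
  also have "x ^ (q * q) = x" using pow_q2 by (simp add: power2_eq_square)
  finally show ?thesis unfolding Fq_def by (simp add: algebra_simps)
qed

lemma card_fib_le: "card (fib c) \<le> q"
  unfolding fib_def by (rule card_trace_eq_le) (use q_ge2 in simp)

lemma card_Fq_le: "card Fq \<le> q"
  unfolding Fq_def using card_frob_fix_le[where 'a='a] q_ge2 by simp

lemma card_fib_Fq: "card Fq = q \<and> (\<forall>c\<in>Fq. card (fib c) = q)"
proof -
  have U: "(UNIV::'a set) = (\<Union>c\<in>Fq. fib c)"
    using tr_in_Fq unfolding fib_def by auto
  have "q ^ 2 = card (\<Union>c\<in>Fq. fib c)" using U card by simp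
  also have "\<dots> = (\<Sum>c\<in>Fq. card (fib c))"
    by (rule card_UN_disjoint) (auto simp: fib_def)
  finally have S: "(\<Sum>c\<in>Fq. card (fib c)) = q * q" by (simp add: power2_eq_square)
  have le: "(\<Sum>c\<in>Fq. card (fib c)) \<le> card Fq * q"
    using sum_mono[of Fq "\<lambda>c. card (fib c)" "\<lambda>_. q"] card_fib_le by simp
  hence "q * q \<le> card Fq * q" using S by simp
  hence cF: "card Fq = q" using card_Fq_le q_pos by simp
  have "\<forall>c\<in>Fq. card (fib c) = q"
  proof (rule ccontr)
    assume "\<not> ?thesis"
    then obtain c0 where c0: "c0 \<in> Fq" "card (fib c0) \<noteq> q" by auto
    hence "card (fib c0) < q" using card_fib_le[of c0] by simp
    hence "(\<Sum>c\<in>Fq. card (fib c)) < (\<Sum>c\<in>Fq. q)"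
      by (intro sum_strict_mono_ex1) (use c0 card_fib_le in auto)
    thus False using S cF by simp
  qed
  thus ?thesis using cF by simp
qed

lemma card_Fq: "card Fq = q" using card_fib_Fq by simp
lemma card_fib: "c \<in> Fq \<Longrightarrow> card (fib c) = q" using card_fib_Fq by simp

definition K :: "'a set" where "K = fib 0"

lemma card_K: "card K = q" unfolding K_def by (rule card_fib) (simp add: Fq_def q_pos)

lemma fib_shift: assumes "y0 \<in> fib c" shows "fib c = (\<lambda>t. y0 + t) ` K"
proof (intro set_eqI iffI)
  fix y assume "y \<in> fib c"
  hence "y - y0 \<in> K" using assms unfolding K_def fib_def by (simp add: frob_diff algebra_simps)
  thus "y \<in> (\<lambda>t. y0 + t) ` K" by (intro image_eqI[where x="y - y0"]) auto
next
  fix y assume "y \<in> (\<lambda>t. y0 + t) ` K"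
  thus "y \<in> fib c" using assms unfolding K_def fib_def by (auto simp: frob_add algebra_simps)
qed

lemma sum_K_pow: "(\<Sum>t\<in>K. t ^ j) = (if j = q - 1 then 1 else 0)" if "j \<le> q - 1"
proof (cases "j = q - 1")
  case True
  have "0 \<in> K" unfolding K_def fib_def using q_pos by simp
  have "(\<Sum>t\<in>K. t ^ j) = 0 ^ j + (\<Sum>t\<in>K - {0}. t ^ j)"
    using \<open>0 \<in> K\<close> by (metis add.commute finite sum.remove)
  also have "0 ^ j = (0::'a)" using True q_ge2 by simp
  also have "(\<Sum>t\<in>K - {0}. t ^ j) = (\<Sum>t\<in>K - {0}. -1)"
  proof (rule sum.cong)
    fix t assume t: "t \<in> K - {0}"
    have "t * t ^ (q - 1) = t ^ q" using q_pos by (metis Suc_diff_1 power_Suc)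
    also have "\<dots> = t * (-1)" using t unfolding K_def fib_def by (simp add: eq_neg_iff_add_eq_0)
    finally have "t * t ^ (q - 1) = t * (-1)" .
    thus "t ^ j = -1" using t True by (metis DiffE insertI1 mult_left_cancel)
  qed simp
  also have "\<dots> = - of_nat (q - 1)" using \<open>0 \<in> K\<close> card_K by (simp add: card_Diff_singleton)
  also have "\<dots> = 1" using q_pos ofq by (simp add: of_nat_diff)
  finally show ?thesis using True by simp
next
  case False
  show ?thesis
  proof (cases "j = 0")
    case True thus ?thesis using False card_K ofq by simp
  next
    case j0: False
    have "card {x::'a. x ^ j = 1} \<le> j" using j0 by (intro card_pow_eq_le) auto
    also have "j < card (Fq - {0})" using that False card_Fq by (simp add: card_Diff_singleton Fq_def q_pos)
    finally have "\<not> (Fq - {0}) \<subseteq> {x. x ^ j = 1}"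
      by (metis card_mono finite_Collect_subsets finite_class.finite_UNIV finite_subset leD subset_UNIV)
    then obtain g :: 'a where g: "g \<in> Fq" "g \<noteq> 0" "g ^ j \<noteq> 1" by auto
    have gK: "t \<in> K \<Longrightarrow> g * t \<in> K" for t using g unfolding K_def fib_def Fq_def
      by (auto simp: power_mult_distrib distrib_left[symmetric])
    have gK': "t \<in> K \<Longrightarrow> t / g \<in> K" for t using g unfolding K_def fib_def Fq_def
      by (auto simp: power_divide add_divide_distrib[symmetric])
    have "(\<Sum>t\<in>K. (g * t) ^ j) = (\<Sum>t\<in>K. t ^ j)"
      by (rule sum.reindex_bij_witness[where i="\<lambda>c. c / g" and j="\<lambda>c. g * c"]) (use g gK gK' in auto)
    hence "g ^ j * (\<Sum>t\<in>K. t ^ j) = (\<Sum>t\<in>K. t ^ j)"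
      by (simp add: power_mult_distrib sum_distrib_left)
    hence "(g ^ j - 1) * (\<Sum>t\<in>K. t ^ j) = 0" by (simp add: algebra_simps)
    thus ?thesis using g False by simp
  qed
qed

lemma sum_fib_pow:
  assumes "c \<in> Fq" "b < q"
  shows "(\<Sum>y\<in>fib c. y ^ b) = (if b = q - 1 then 1 else 0)"
proof -
  have "fib c \<noteq> {}" using card_fib[OF assms(1)] q_pos by auto
  then obtain y0 where y0: "y0 \<in> fib c" by auto
  have inj: "inj_on (\<lambda>t. y0 + t) K" by (auto simp: inj_on_def)
  have "(\<Sum>y\<in>fib c. y ^ b) = (\<Sum>t\<in>K. (y0 + t) ^ b)"
    by (simp add: fib_shift[OF y0] sum.reindex[OF inj])
  also have "\<dots> = (\<Sum>t\<in>K. \<Sum>k\<le>b. of_nat (b choose k) * y0 ^ k * t ^ (b - k))"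
    by (simp add: binomial_ring)
  also have "\<dots> = (\<Sum>k\<le>b. of_nat (b choose k) * y0 ^ k * (\<Sum>t\<in>K. t ^ (b - k)))"
    by (subst sum.swap) (simp add: sum_distrib_left mult.assoc)
  also have "\<dots> = (\<Sum>k\<le>b. of_nat (b choose k) * y0 ^ k * (if b - k = q - 1 then 1 else 0))"
    by (rule sum.cong) (use assms in \<open>auto simp: sum_K_pow\<close>)
  also have "\<dots> = (\<Sum>k\<in>{0}. of_nat (b choose k) * y0 ^ k * (if b - k = q - 1 then 1 else 0))"
    by (rule sum.mono_neutral_right) (use assms in auto)
  finally show ?thesis using assms by simp
qed

abbreviation H where "H \<equiv> hermitian_affine q :: ('a \<times> 'a) set"

lemma H_Sigma: "H = Sigma UNIV (\<lambda>x. fib (x ^ (q + 1)))"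
  unfolding hermitian_affine_def fib_def by auto

lemma card_H: "card H = q ^ 3"
proof -
  have "card H = (\<Sum>x\<in>(UNIV::'a set). card (fib (x ^ (q + 1))))"
    unfolding H_Sigma by (rule card_SigmaI) auto
  also have "\<dots> = (\<Sum>x\<in>(UNIV::'a set). q)" using card_fib norm_in_Fq by simp
  finally show ?thesis using card by (simp add: power2_eq_square power3_eq_cube)
qed

lemma sum_H: "(\<Sum>P\<in>H. f P) = (\<Sum>x\<in>UNIV. \<Sum>y\<in>fib (x ^ (q + 1)). f (x, y))"
  unfolding H_Sigma by (simp add: sum.Sigma)

lemma sum_H_mono:
  assumes "b < q"
  shows "(\<Sum>P\<in>H. fst P ^ a * snd P ^ b) = (if b = q - 1 then (\<Sum>x\<in>(UNIV::'a set). x ^ a) else 0)"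
proof -
  have "(\<Sum>P\<in>H. fst P ^ a * snd P ^ b) = (\<Sum>x\<in>(UNIV::'a set). x ^ a * (\<Sum>y\<in>fib (x ^ (q + 1)). y ^ b))"
    by (simp add: sum_H sum_distrib_left)
  also have "\<dots> = (\<Sum>x\<in>(UNIV::'a set). x ^ a * (if b = q - 1 then 1 else 0))"
    using sum_fib_pow[OF norm_in_Fq assms] by simp
  finally show ?thesis by auto
qed

end

context herm begin

definition rho :: "nat \<times> nat \<Rightarrow> nat" where "rho \<mu> = q * fst \<mu> + (q + 1) * snd \<mu>"
definition Mon :: "nat \<Rightarrow> (nat \<times> nat) set" where "Mon s = {\<mu>. snd \<mu> < q \<and> rho \<mu> \<le> s}"
definition mono :: "nat \<times> nat \<Rightarrow> 'a \<times> 'a \<Rightarrow> 'a" where "mono \<mu> P = fst P ^ fst \<mu> * snd P ^ snd \<mu>"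
definition inV :: "nat \<Rightarrow> ('a \<times> 'a \<Rightarrow> 'a) \<Rightarrow> bool" where
  "inV s f \<longleftrightarrow> (\<exists>c. \<forall>P\<in>H. f P = (\<Sum>\<mu>\<in>Mon s. c \<mu> * mono \<mu> P))"

lemma finite_Mon: "finite (Mon s)"
proof -
  have "Mon s \<subseteq> {..s} \<times> {..<q}"
  proof
    fix \<mu> assume "\<mu> \<in> Mon s"
    then obtain a b where ab: "\<mu> = (a, b)" "b < q" "rho (a, b) \<le> s" unfolding Mon_def by (cases \<mu>) auto
    hence "b < q" "rho (a, b) \<le> s" by auto
    have "a \<le> q * a" using q_pos by simp
    moreover have "q * a \<le> s" using \<open>rho (a, b) \<le> s\<close> unfolding rho_def by simp
    ultimately have "a \<le> s" by linarith
    thus "\<mu> \<in> {..s} \<times> {..<q}" using \<open>b < q\<close> ab(1) by simp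
  qed
  thus ?thesis using finite_subset by blast
qed

lemma Mon_mono: "s \<le> t \<Longrightarrow> Mon s \<subseteq> Mon t" unfolding Mon_def by auto

lemma inV_cong: assumes "inV s f" "\<And>P. P \<in> H \<Longrightarrow> f P = g P" shows "inV s g"
proof -
  obtain c where c: "\<forall>P\<in>H. f P = (\<Sum>\<mu>\<in>Mon s. c \<mu> * mono \<mu> P)" using assms unfolding inV_def by auto
  show ?thesis unfolding inV_def using c assms(2) by (intro exI[of _ c]) simp
qed

lemma inV_mono: assumes "inV s f" "s \<le> t" shows "inV t f"
proof -
  obtain c where c: "\<forall>P\<in>H. f P = (\<Sum>\<mu>\<in>Mon s. c \<mu> * mono \<mu> P)" using assms unfolding inV_def by auto
  let ?c = "\<lambda>\<mu>. if \<mu> \<in> Mon s then c \<mu> else 0"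
  have "(\<Sum>\<mu>\<in>Mon t. ?c \<mu> * mono \<mu> P) = (\<Sum>\<mu>\<in>Mon s. c \<mu> * mono \<mu> P)" for P
    by (rule sum.mono_neutral_cong_right) (use Mon_mono[OF assms(2)] finite_Mon in auto)
  thus ?thesis unfolding inV_def using c by (intro exI[of _ ?c]) simp
qed

lemma inV_zero: "inV s (\<lambda>P. 0)"
  unfolding inV_def by (rule exI[of _ "\<lambda>_. 0"]) simp

lemma inV_add: assumes "inV s f" "inV s g" shows "inV s (\<lambda>P. f P + g P)"
proof -
  obtain c where c: "\<forall>P\<in>H. f P = (\<Sum>\<mu>\<in>Mon s. c \<mu> * mono \<mu> P)" using assms unfolding inV_def by auto
  obtain d where d: "\<forall>P\<in>H. g P = (\<Sum>\<mu>\<in>Mon s. d \<mu> * mono \<mu> P)" using assms unfolding inV_def by auto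
  show ?thesis unfolding inV_def
    by (rule exI[of _ "\<lambda>\<mu>. c \<mu> + d \<mu>"]) (simp add: c d sum.distrib algebra_simps)
qed

lemma inV_smult: assumes "inV s f" shows "inV s (\<lambda>P. a * f P)"
proof -
  obtain c where c: "\<forall>P\<in>H. f P = (\<Sum>\<mu>\<in>Mon s. c \<mu> * mono \<mu> P)" using assms unfolding inV_def by auto
  show ?thesis unfolding inV_def
    by (rule exI[of _ "\<lambda>\<mu>. a * c \<mu>"]) (simp add: c sum_distrib_left algebra_simps)
qed

lemma inV_neg: assumes "inV s f" shows "inV s (\<lambda>P. - f P)"
  using inV_smult[OF assms, of "-1"] by simp

lemma inV_diff: assumes "inV s f" "inV s g" shows "inV s (\<lambda>P. f P - g P)"
  using inV_add[OF assms(1) inV_neg[OF assms(2)]] by simp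

lemma inV_sum: assumes "\<And>i. i \<in> A \<Longrightarrow> inV s (f i)" shows "inV s (\<lambda>P. \<Sum>i\<in>A. f i P)"
  using assms
proof (induction A rule: infinite_finite_induct)
  case (infinite A) thus ?case by (simp add: inV_zero)
next
  case empty thus ?case by (simp add: inV_zero)
next
  case (insert x F) thus ?case by (simp add: inV_add)
qed

lemma inV_monoI: assumes "snd \<mu> < q" shows "inV (rho \<mu>) (mono \<mu>)"
  unfolding inV_def
proof (rule exI[of _ "\<lambda>\<nu>. if \<nu> = \<mu> then 1 else 0"], intro ballI)
  fix P
  have "\<mu> \<in> Mon (rho \<mu>)" using assms unfolding Mon_def by simp
  thus "mono \<mu> P = (\<Sum>\<nu>\<in>Mon (rho \<mu>). (if \<nu> = \<mu> then 1 else 0) * mono \<nu> P)"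
  proof -
    have "(\<Sum>\<nu>\<in>Mon (rho \<mu>). (if \<nu> = \<mu> then 1 else 0) * mono \<nu> P) = (\<Sum>\<nu>\<in>Mon (rho \<mu>). if \<nu> = \<mu> then mono \<nu> P else 0)"
      by (rule sum.cong) auto
    thus ?thesis using finite_Mon \<open>\<mu> \<in> Mon (rho \<mu>)\<close> by (simp add: sum.delta')
  qed
qed

lemma mono_reduce_step:
  assumes "P \<in> H" "q \<le> B"
  shows "mono (A, B) P = mono (A + q + 1, B - q) P - mono (A, B - q + 1) P"
proof -
  obtain x y where P: "P = (x, y)" by (cases P)
  have h: "y ^ q = x ^ (q + 1) - y" using assms(1) P unfolding hermitian_affine_def by simp
  have "y ^ B = y ^ (B - q) * y ^ q" using assms(2) by (simp add: power_add[symmetric])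
  also have "\<dots> = y ^ (B - q) * x ^ (q + 1) - y ^ (B - q + 1)" by (simp add: h algebra_simps)
  finally have "x ^ A * y ^ B = x ^ A * (y ^ (B - q) * x ^ (q + 1) - y ^ (B - q + 1))" by simp
  also have "\<dots> = x ^ (A + q + 1) * y ^ (B - q) - x ^ A * y ^ (B - q + 1)"
    by (simp add: right_diff_distrib power_add mult_ac)
  finally show ?thesis unfolding P mono_def by simp
qed

lemma inV_mono_any: "inV (rho (A, B)) (mono (A, B))"
proof (induction B arbitrary: A rule: less_induct)
  case (less B)
  show ?case
  proof (cases "B < q")
    case True thus ?thesis using inV_monoI by simp
  next
    case False
    obtain C where C: "B = q + C" using False by (metis le_add_diff_inverse not_less)
    have r1: "rho (A + q + 1, B - q) = rho (A, B)" unfolding rho_def C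
      by (simp add: algebra_simps)
    have "1 \<le> q * q" using q_pos by simp
    hence r2: "rho (A, B - q + 1) \<le> rho (A, B)" unfolding rho_def C
      by (simp add: algebra_simps)
    have i1: "inV (rho (A, B)) (mono (A + q + 1, B - q))"
      using less.IH[of "B - q" "A + q + 1"] False q_pos r1 by simp
    have "B - q + 1 < B" using False q_ge2 by simp
    hence "inV (rho (A, B - q + 1)) (mono (A, B - q + 1))" using less.IH by blast
    hence i2: "inV (rho (A, B)) (mono (A, B - q + 1))" using inV_mono r2 by blast
    show ?thesis
      by (rule inV_cong[OF inV_diff[OF i1 i2]]) (use False mono_reduce_step in auto)
  qed
qed

lemma mono_add: "mono \<mu> P * mono \<nu> P = mono (fst \<mu> + fst \<nu>, snd \<mu> + snd \<nu>) P"
  unfolding mono_def by (simp add: power_add algebra_simps)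

lemma rho_add: "rho (fst \<mu> + fst \<nu>, snd \<mu> + snd \<nu>) = rho \<mu> + rho \<nu>"
  unfolding rho_def by (simp add: algebra_simps)

lemma inV_mult: assumes "inV s f" "inV t g" shows "inV (s + t) (\<lambda>P. f P * g P)"
proof -
  obtain c where c: "\<forall>P\<in>H. f P = (\<Sum>\<mu>\<in>Mon s. c \<mu> * mono \<mu> P)" using assms unfolding inV_def by auto
  obtain d where d: "\<forall>P\<in>H. g P = (\<Sum>\<mu>\<in>Mon t. d \<mu> * mono \<mu> P)" using assms unfolding inV_def by auto
  have *: "inV (s + t) (\<lambda>P. \<Sum>\<mu>\<in>Mon s. \<Sum>\<nu>\<in>Mon t. c \<mu> * d \<nu> * mono (fst \<mu> + fst \<nu>, snd \<mu> + snd \<nu>) P)"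
  proof (intro inV_sum inV_smult)
    fix \<mu> \<nu> assume "\<mu> \<in> Mon s" "\<nu> \<in> Mon t"
    hence "rho \<mu> + rho \<nu> \<le> s + t" unfolding Mon_def by simp
    thus "inV (s + t) (mono (fst \<mu> + fst \<nu>, snd \<mu> + snd \<nu>))"
      using inV_mono_any inV_mono rho_add by (metis prod.collapse)
  qed
  have **: "P \<in> H \<Longrightarrow> f P * g P = (\<Sum>\<mu>\<in>Mon s. \<Sum>\<nu>\<in>Mon t. c \<mu> * d \<nu> * mono (fst \<mu> + fst \<nu>, snd \<mu> + snd \<nu>) P)" for P
    by (simp add: c d sum_product mono_add[symmetric] algebra_simps)
  show ?thesis by (rule inV_cong[OF *]) (simp add: **)
qed

lemma inV_const: "inV 0 (\<lambda>P. a)"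
proof -
  have "inV (rho (0, 0)) (mono (0, 0))" by (rule inV_monoI) (simp add: q_pos)
  hence "inV 0 (mono (0,0))" by (simp add: rho_def)
  from inV_smult[OF this, of a] show ?thesis by (simp add: mono_def)
qed

lemma inV_xpow: "inV (q * i) (\<lambda>P. fst P ^ i)"
proof -
  have "mono (i, 0) = (\<lambda>P. fst P ^ i)" by (rule ext) (simp add: mono_def)
  thus ?thesis using inV_mono_any[of i 0] by (simp add: rho_def)
qed

lemma inV_ypow: "inV ((q + 1) * b) (\<lambda>P. snd P ^ b)"
proof -
  have "mono (0, b) = (\<lambda>P. snd P ^ b)" by (rule ext) (simp add: mono_def)
  thus ?thesis using inV_mono_any[of 0 b] by (simp add: rho_def)
qed

lemma inV_poly_x: "inV (q * degree p) (\<lambda>P. poly p (fst P))"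
proof -
  have "inV (q * degree p) (\<lambda>P. \<Sum>i\<le>degree p. coeff p i * fst P ^ i)"
    by (intro inV_sum inV_smult) (rule inV_mono[OF inV_xpow], simp)
  thus ?thesis by (simp add: poly_altdef)
qed

definition inS :: "nat \<Rightarrow> bool" where "inS n \<longleftrightarrow> (q + 1) * (n mod q) \<le> n"
definition rep :: "nat \<Rightarrow> nat \<times> nat" where "rep n = ((n - (q + 1) * (n mod q)) div q, n mod q)"

lemma rep_snd: "snd (rep n) < q" unfolding rep_def using q_pos by simp

lemma rho_rep: assumes "inS n" shows "rho (rep n) = n"
proof -
  let ?r = "n mod q"
  define d where "d = n div q"
  define r where "r = n mod q"
  have n: "n = q * d + r" unfolding d_def r_def by simp
  have "(q + 1) * r \<le> q * d + r" using assms n unfolding inS_def r_def[symmetric] by simp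
  hence "q * r \<le> q * d" by (simp add: algebra_simps)
  hence "r \<le> d" using q_pos by simp
  have "n - (q + 1) * r = q * d + r - (q * r + r)" using n by (simp add: algebra_simps)
  also have "\<dots> = q * d - q * r" by simp
  also have "\<dots> = q * (d - r)" by (simp add: diff_mult_distrib2)
  finally have e: "n - (q + 1) * ?r = q * (d - r)" unfolding r_def .
  hence "q * ((n - (q + 1) * ?r) div q) = n - (q + 1) * ?r" using q_pos by simp
  thus ?thesis using assms unfolding rho_def rep_def inS_def by simp
qed

lemma rho_inS: assumes "snd \<mu> < q" shows "inS (rho \<mu>)" and "rep (rho \<mu>) = \<mu>"
proof -
  obtain a b where mu: "\<mu> = (a, b)" by (cases \<mu>)
  have "q * a + (q + 1) * b = b + q * (a + b)" by (simp add: algebra_simps)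
  hence m: "(q * a + (q + 1) * b) mod q = b" using assms mu by simp
  show "inS (rho \<mu>)" unfolding inS_def rho_def mu using m by simp
  show "rep (rho \<mu>) = \<mu>" unfolding rep_def rho_def mu using m q_pos by simp
qed

lemma rho_inj: assumes "snd \<mu> < q" "snd \<nu> < q" "rho \<mu> = rho \<nu>" shows "\<mu> = \<nu>"
  using rho_inS(2)[OF assms(1)] rho_inS(2)[OF assms(2)] assms(3) by metis

lemma card_pairs_lt: "card {(k, r). k < r \<and> r < (n::nat)} = n * (n - 1) div 2"
proof (induction n)
  case 0 thus ?case by simp
next
  case (Suc n)
  have e: "{(k, r). k < r \<and> r < Suc n} = {(k, r). k < r \<and> r < n} \<union> {..<n} \<times> {n}" by auto
  have f: "finite {(k, r). k < r \<and> r < (n::nat)}"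
    by (rule finite_subset[of _ "{..<n} \<times> {..<n}"]) auto
  have "card {(k, r). k < r \<and> r < Suc n} = n * (n - 1) div 2 + n"
    unfolding e by (subst card_Un_disjoint) (use f Suc in auto)
  also have "\<dots> = Suc n * (Suc n - 1) div 2"
  proof -
    have "Suc n * (Suc n - 1) = n * (n - 1) + 2 * n" by (cases n) (auto simp: algebra_simps)
    moreover have "(n * (n - 1) + 2 * n) div 2 = n * (n - 1) div 2 + n" by simp
    ultimately show ?thesis by simp
  qed
  finally show ?case .
qed

definition gg :: nat where "gg = q * (q - 1) div 2"

lemma two_gg: "2 * gg = q * (q - 1)"
proof -
  have "even (q * (q - 1))" by (cases "even q") auto
  thus ?thesis unfolding gg_def by simp
qed

lemma gaps_card: "card {\<sigma>. \<sigma> \<le> n \<and> \<not> inS \<sigma>} \<le> gg"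
proof -
  have "inj_on (\<lambda>\<sigma>. (\<sigma> div q, \<sigma> mod q)) {\<sigma>. \<sigma> \<le> n \<and> \<not> inS \<sigma>}"
  proof (intro inj_onI)
    fix x y assume "(x div q, x mod q) = (y div q, y mod q)"
    hence "x div q = y div q" "x mod q = y mod q" by auto
    thus "x = y" by (metis div_mult_mod_eq)
  qed
  moreover have "(\<lambda>\<sigma>. (\<sigma> div q, \<sigma> mod q)) ` {\<sigma>. \<sigma> \<le> n \<and> \<not> inS \<sigma>} \<subseteq> {(k, r). k < r \<and> r < q}"
  proof clarify
    fix \<sigma> assume s: "\<sigma> \<le> n" "\<not> inS \<sigma>"
    define d where "d = \<sigma> div q"
    define r where "r = \<sigma> mod q"
    have "\<sigma> = q * d + r" unfolding d_def r_def by simp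
    hence "(q + 1) * r > q * d + r" using s unfolding inS_def r_def[symmetric] by simp
    hence "q * r > q * d" by (simp add: algebra_simps)
    hence "d < r" by simp
    hence "\<sigma> div q < \<sigma> mod q" unfolding d_def r_def .
    thus "\<sigma> div q < \<sigma> mod q \<and> \<sigma> mod q < q" using q_pos by simp
  qed
  moreover have "finite {(k, r). k < r \<and> r < q}"
    by (rule finite_subset[of _ "{..<q} \<times> {..<q}"]) auto
  ultimately have "card {\<sigma>. \<sigma> \<le> n \<and> \<not> inS \<sigma>} \<le> card {(k, r). k < r \<and> r < q}"
    using card_inj_on_le by blast
  thus ?thesis using card_pairs_lt unfolding gg_def by simp
qed

definition pairs :: "nat \<Rightarrow> nat set" where "pairs n = {\<sigma>. \<sigma> \<le> n \<and> inS \<sigma> \<and> inS (n - \<sigma>)}"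

lemma finite_pairs: "finite (pairs n)" unfolding pairs_def by simp

lemma card_pairs: "n + 1 \<le> card (pairs n) + 2 * gg"
proof -
  let ?G1 = "{\<sigma>. \<sigma> \<le> n \<and> \<not> inS \<sigma>}" and ?G2 = "{\<sigma>. \<sigma> \<le> n \<and> \<not> inS (n - \<sigma>)}"
  have "?G2 = (\<lambda>\<sigma>. n - \<sigma>) ` ?G1"
  proof (intro set_eqI iffI)
    fix x assume "x \<in> ?G2" thus "x \<in> (\<lambda>\<sigma>. n - \<sigma>) ` ?G1" by (intro image_eqI[of _ _ "n - x"]) auto
  qed auto
  hence c2: "card ?G2 \<le> gg" using gaps_card[of n] card_image_le[of ?G1 "\<lambda>\<sigma>. n - \<sigma>"] by simp
  have "{..n} \<subseteq> pairs n \<union> ?G1 \<union> ?G2" unfolding pairs_def by auto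
  hence "card {..n} \<le> card (pairs n \<union> ?G1 \<union> ?G2)" by (intro card_mono) (auto simp: finite_pairs)
  also have "\<dots> \<le> card (pairs n) + card ?G1 + card ?G2"
    by (metis (no_types, lifting) add_le_mono1 card_Un_le order_trans)
  finally show ?thesis using gaps_card[of n] c2 by simp
qed

definition rmax :: nat where "rmax = q ^ 3 + q ^ 2 - q - 1"

lemma rmax_eq: "rmax = rho (q ^ 2 - 1, q - 1)"
proof -
  have "q ^ 2 \<ge> 1" using q_pos by simp
  hence "rho (q ^ 2 - 1, q - 1) = q * q ^ 2 - q + (q * q - 1)" unfolding rho_def
    by (simp add: algebra_simps diff_mult_distrib2 power2_eq_square)
  thus ?thesis unfolding rmax_def using q_ge2 by (simp add: power2_eq_square power3_eq_cube)
qed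

lemma rmax_gg: "rmax + 1 = q ^ 3 + 2 * gg"
proof -
  have "2 * q \<le> q * q" using mult_le_mono1[OF q_ge2, of q] by simp
  hence a: "q * q \<ge> q + 1" using q_ge2 by linarith
  have "2 * gg = q * q - q" unfolding two_gg by (simp add: diff_mult_distrib2)
  thus ?thesis unfolding rmax_def power2_eq_square using a by linarith
qed

lemma sum_H_inV0:
  assumes "inV (rmax - 1) f"
  shows "(\<Sum>P\<in>H. f P) = 0"
proof -
  obtain c where c: "\<forall>P\<in>H. f P = (\<Sum>\<mu>\<in>Mon (rmax - 1). c \<mu> * mono \<mu> P)" using assms unfolding inV_def by auto
  have z: "(\<Sum>P\<in>H. mono \<mu> P) = 0" if mu: "\<mu> \<in> Mon (rmax - 1)" for \<mu>
  proof -
    obtain a b where ab: "\<mu> = (a, b)" by (cases \<mu>)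
    have b: "b < q" and le: "q * a + (q + 1) * b \<le> rmax - 1" using mu ab unfolding Mon_def rho_def by auto
    show ?thesis
    proof (cases "b = q - 1")
      case True
      have "q \<le> q ^ 3" using q_pos by (intro self_le_power) auto
      hence "rmax \<ge> 1" using rmax_gg q_ge2 by simp
      hence "rho (a, b) < rmax" using le unfolding rho_def by simp
      hence "rho (a, q - 1) < rho (q ^ 2 - 1, q - 1)" using True rmax_eq by simp
      hence "q * a < q * (q ^ 2 - 1)" unfolding rho_def by simp
      hence "a < q ^ 2 - 1" by simp
      hence "(\<Sum>x\<in>(UNIV::'a set). x ^ a) = 0" using sum_pow_UNIV[where 'a='a] card by simp
      thus ?thesis using sum_H_mono[OF b, of a] ab True unfolding mono_def by simp
    next
      case False thus ?thesis using sum_H_mono[OF b, of a] ab unfolding mono_def by simp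
    qed
  qed
  have "(\<Sum>P\<in>H. f P) = (\<Sum>P\<in>H. \<Sum>\<mu>\<in>Mon (rmax - 1). c \<mu> * mono \<mu> P)" using c by simp
  also have "\<dots> = (\<Sum>\<mu>\<in>Mon (rmax - 1). c \<mu> * (\<Sum>P\<in>H. mono \<mu> P))"
    by (subst sum.swap) (simp add: sum_distrib_left)
  also have "\<dots> = 0" using z by simp
  finally show ?thesis .
qed

lemma mono_reduce:
  "\<exists>g. inV (rho (A, B) - 1) g \<and> (\<forall>P\<in>H. mono (A, B) P = mono (A + (q + 1) * (B div q), B mod q) P + g P)"
proof (induction B arbitrary: A rule: less_induct)
  case (less B)
  show ?case
  proof (cases "B < q")
    case True thus ?thesis by (intro exI[of _ "\<lambda>_. 0"]) (simp add: inV_zero)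
  next
    case False
    obtain g1 where g1: "inV (rho (A + q + 1, B - q) - 1) g1"
      "\<forall>P\<in>H. mono (A + q + 1, B - q) P = mono (A + q + 1 + (q + 1) * ((B - q) div q), (B - q) mod q) P + g1 P"
      using less.IH[of "B - q" "A + q + 1"] False q_pos by auto
    obtain C where C: "B = q + C" using False by (metis le_add_diff_inverse not_less)
    have r1: "rho (A + q + 1, B - q) = rho (A, B)" unfolding rho_def C
      by (simp add: algebra_simps)
    have "2 * q \<le> q * q" using mult_le_mono1[OF q_ge2, of q] by simp
    hence "2 \<le> q * q" using q_ge2 by linarith
    hence r2: "rho (A, B - q + 1) \<le> rho (A, B) - 1" unfolding rho_def C
      by (simp add: algebra_simps)
    have e1: "A + q + 1 + (q + 1) * ((B - q) div q) = A + (q + 1) * (B div q)"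
    proof -
      have "B div q = Suc ((B - q) div q)" using False q_pos by (simp add: div_if)
      thus ?thesis by simp
    qed
    have e2: "(B - q) mod q = B mod q" using False by (simp add: mod_if)
    have i2: "inV (rho (A, B) - 1) (mono (A, B - q + 1))"
      using inV_mono[OF inV_mono_any r2] .
    show ?thesis
    proof (intro exI conjI ballI)
      show "inV (rho (A, B) - 1) (\<lambda>P. g1 P - mono (A, B - q + 1) P)"
        using inV_diff[OF _ i2] g1(1) r1 by simp
      fix P assume P: "P \<in> H"
      have s1: "mono (A, B) P = mono (A + q + 1, B - q) P - mono (A, B - q + 1) P"
        using mono_reduce_step[OF P, of B A] False by simp
      have s2: "mono (A + q + 1, B - q) P = mono (A + q + 1 + (q + 1) * ((B - q) div q), (B - q) mod q) P + g1 P"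
        using g1(2) P by blast
      have s3: "mono (A + q + 1 + (q + 1) * ((B - q) div q), (B - q) mod q) P = mono (A + (q + 1) * (B div q), B mod q) P"
        by (simp only: e1 e2)
      show "mono (A, B) P = mono (A + (q + 1) * (B div q), B mod q) P + (g1 P - mono (A, B - q + 1) P)"
        by (simp only: s1 s2 s3) (simp add: algebra_simps)
    qed
  qed
qed

lemma sum_H_top:
  assumes "rho (A, B) = rmax"
  shows "(\<Sum>P\<in>H. mono (A, B) P) = -1"
proof -
  obtain g where g: "inV (rho (A, B) - 1) g"
    "\<forall>P\<in>H. mono (A, B) P = mono (A + (q + 1) * (B div q), B mod q) P + g P"
    using mono_reduce by blast
  let ?\<mu> = "(A + (q + 1) * (B div q), B mod q)"
  have "rho ?\<mu> = rho (A, B)"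
  proof -
    define d where "d = B div q"
    define r where "r = B mod q"
    have B: "B = q * d + r" unfolding d_def r_def by simp
    have "rho ?\<mu> = q * (A + (q + 1) * d) + (q + 1) * r" unfolding rho_def d_def r_def by simp
    moreover have "rho (A, B) = q * A + (q + 1) * (q * d + r)" unfolding rho_def using B by simp
    ultimately show ?thesis by (simp add: algebra_simps)
  qed
  hence "?\<mu> = (q ^ 2 - 1, q - 1)" using rmax_eq assms q_pos by (intro rho_inj) auto
  hence "(\<Sum>P\<in>H. mono ?\<mu> P) = -1"
    using sum_H_mono[of "q - 1" "q ^ 2 - 1"] q_pos sum_pow_UNIV_top[where 'a='a] card
    unfolding mono_def by simp
  moreover have "(\<Sum>P\<in>H. g P) = 0" using sum_H_inV0 g(1) assms by simp
  ultimately show ?thesis using g(2) by (simp add: sum.distrib)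
qed

lemma sum_H_low:
  assumes "rho (A, B) < rmax"
  shows "(\<Sum>P\<in>H. mono (A, B) P) = 0"
  using sum_H_inV0[OF inV_mono[OF inV_mono_any]] assms by simp

end

lemma tri_rank:
  fixes a b :: "nat \<Rightarrow> 'p \<Rightarrow> 'a::field"
  assumes "finite Z" "finite I"
    "\<forall>i\<in>I. \<forall>j\<in>I. i < j \<longrightarrow> (\<Sum>P\<in>Z. a i P * b j P) = 0"
    "\<forall>i\<in>I. (\<Sum>P\<in>Z. a i P * b i P) \<noteq> 0"
  shows "card I \<le> card Z"
  using assms
proof (induction Z arbitrary: I a rule: finite_induct)
  case empty
  hence "I = {}" by auto
  thus ?case by simp
next
  case (insert P Z)
  show ?case
  proof (cases "\<forall>i\<in>I. a i P = 0")
    case True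
    have eq: "(\<Sum>Q\<in>insert P Z. a i Q * b j Q) = (\<Sum>Q\<in>Z. a i Q * b j Q)" if "i \<in> I" for i j
      using True that insert(1,2) by (simp add: sum.insert)
    have "card I \<le> card Z"
      by (rule insert.IH) (use insert.prems eq in auto)
    thus ?thesis using insert(1,2) by simp
  next
    case False
    let ?J = "{i\<in>I. a i P \<noteq> 0}"
    define i0 where "i0 = Min ?J"
    have fJ: "finite ?J" using insert.prems(1) by simp
    have "?J \<noteq> {}" using False by auto
    hence i0: "i0 \<in> I" "a i0 P \<noteq> 0" using Min_in[OF fJ] unfolding i0_def by auto
    have below: "a i P = 0" if "i \<in> I" "i < i0" for i
    proof (rule ccontr)
      assume "a i P \<noteq> 0"
      hence "i0 \<le> i" unfolding i0_def using fJ that(1) by (intro Min_le) auto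
      thus False using that by simp
    qed
    define l where "l i = a i P / a i0 P" for i
    define a' where "a' i Q = a i Q - l i * a i0 Q" for i Q
    let ?S = "\<lambda>i j. (\<Sum>Q\<in>insert P Z. a i Q * b j Q)"
    have a'P: "a' i P = 0" for i unfolding a'_def l_def using i0 by simp
    have S': "(\<Sum>Q\<in>Z. a' i Q * b j Q) = ?S i j - l i * ?S i0 j" for i j
    proof -
      have "(\<Sum>Q\<in>Z. a' i Q * b j Q) = (\<Sum>Q\<in>insert P Z. a' i Q * b j Q)"
        using insert(1,2) a'P by (simp add: sum.insert)
      also have "\<dots> = ?S i j - l i * ?S i0 j"
        unfolding a'_def by (simp add: algebra_simps sum_subtractf sum_distrib_left)
      finally show ?thesis .
    qed
    have l0: "l i = 0" if "i \<in> I" "i < i0" for i unfolding l_def using below[OF that] by simp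
    have "card (I - {i0}) \<le> card Z"
    proof (rule insert.IH)
      show "finite (I - {i0})" using insert.prems(1) by simp
      show "\<forall>i\<in>I - {i0}. \<forall>j\<in>I - {i0}. i < j \<longrightarrow> (\<Sum>Q\<in>Z. a' i Q * b j Q) = 0"
      proof (intro ballI impI)
        fix i j assume ij: "i \<in> I - {i0}" "j \<in> I - {i0}" "i < j"
        have "?S i j = 0" using insert.prems(2) ij by auto
        moreover have "l i * ?S i0 j = 0"
        proof (cases "i < i0")
          case True thus ?thesis using l0 ij by simp
        next
          case False
          hence "i0 < j" using ij by auto
          thus ?thesis using insert.prems(2) i0 ij by auto
        qed
        ultimately show "(\<Sum>Q\<in>Z. a' i Q * b j Q) = 0" using S' by simp
      qed
      show "\<forall>i\<in>I - {i0}. (\<Sum>Q\<in>Z. a' i Q * b i Q) \<noteq> 0"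
      proof
        fix i assume i: "i \<in> I - {i0}"
        have "?S i i \<noteq> 0" using insert.prems(3) i by auto
        moreover have "l i * ?S i0 i = 0"
        proof (cases "i < i0")
          case True thus ?thesis using l0 i by simp
        next
          case False
          hence "i0 < i" using i by auto
          thus ?thesis using insert.prems(2) i0 i by auto
        qed
        ultimately show "(\<Sum>Q\<in>Z. a' i Q * b i Q) \<noteq> 0" unfolding S' by auto
      qed
    qed
    moreover have "card I = Suc (card (I - {i0}))"
      using i0 insert.prems(1) by (metis card_Suc_Diff1)
    ultimately show ?thesis using insert(1,2) by simp
  qed
qed

lemma interp_gen:
  fixes e :: "'j \<Rightarrow> 'p \<Rightarrow> 'a::field"
  assumes "finite S" "finite J"
    "\<forall>w. (\<forall>j\<in>J. (\<Sum>P\<in>S. w P * e j P) = 0) \<longrightarrow> (\<forall>P\<in>S. w P = 0)"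
  shows "\<exists>c. \<forall>P\<in>S. t P = (\<Sum>j\<in>J. c j * e j P)"
  using assms
proof (induction S arbitrary: e t rule: finite_induct)
  case empty thus ?case by simp
next
  case (insert P0 S)
  have "\<exists>j0\<in>J. e j0 P0 \<noteq> 0"
  proof (rule ccontr)
    assume "\<not> ?thesis"
    hence z: "\<forall>j\<in>J. e j P0 = 0" by auto
    let ?w = "\<lambda>P. if P = P0 then (1::'a) else 0"
    have "\<forall>j\<in>J. (\<Sum>P\<in>insert P0 S. ?w P * e j P) = 0"
    proof
      fix j assume "j \<in> J"
      have "(\<Sum>P\<in>S. ?w P * e j P) = 0" using insert(2) by (intro sum.neutral) auto
      thus "(\<Sum>P\<in>insert P0 S. ?w P * e j P) = 0" using z \<open>j \<in> J\<close> insert(1,2) by (simp add: sum.insert)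
    qed
    hence "?w P0 = 0" using insert.prems(2)[rule_format, of ?w P0] by simp
    thus False by simp
  qed
  then obtain j0 where j0: "j0 \<in> J" "e j0 P0 \<noteq> 0" by auto
  define l where "l j = e j P0 / e j0 P0" for j
  define e' where "e' j Q = e j Q - l j * e j0 Q" for j Q
  have e'P0: "e' j P0 = 0" for j unfolding e'_def l_def using j0 by simp
  have "\<exists>c'. \<forall>Q\<in>S. t Q - (t P0 / e j0 P0) * e j0 Q = (\<Sum>j\<in>J. c' j * e' j Q)"
  proof (rule insert.IH[OF insert.prems(1)], intro allI impI)
    fix w0 assume w0: "\<forall>j\<in>J. (\<Sum>P\<in>S. w0 P * e' j P) = 0"
    define w where "w Q = (if Q = P0 then - (\<Sum>P\<in>S. w0 P * e j0 P) / e j0 P0 else w0 Q)" for Q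
    have "\<forall>j\<in>J. (\<Sum>P\<in>insert P0 S. w P * e j P) = 0"
    proof
      fix j assume j: "j \<in> J"
      have sw: "(\<Sum>P\<in>S. w P * e j P) = (\<Sum>P\<in>S. w0 P * e j P)"
        unfolding w_def using insert(2) by (intro sum.cong) auto
      have pt: "w0 P * e j P = w0 P * e' j P + l j * (w0 P * e j0 P)" for P
        unfolding e'_def by (simp add: algebra_simps)
      have "(\<Sum>P\<in>S. w0 P * e j P) = (\<Sum>P\<in>S. w0 P * e' j P) + l j * (\<Sum>P\<in>S. w0 P * e j0 P)"
        by (simp only: pt sum.distrib sum_distrib_left)
      also have "\<dots> = l j * (\<Sum>P\<in>S. w0 P * e j0 P)" using w0 j by simp
      finally have "(\<Sum>P\<in>insert P0 S. w P * e j P) = w P0 * e j P0 + l j * (\<Sum>P\<in>S. w0 P * e j0 P)"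
        using insert(1,2) sw by (simp add: sum.insert)
      also have "\<dots> = 0"
      proof -
        have "w P0 * e j P0 = - (e j P0 / e j0 P0) * (\<Sum>P\<in>S. w0 P * e j0 P)" unfolding w_def by simp
        thus ?thesis unfolding l_def by simp
      qed
      finally show "(\<Sum>P\<in>insert P0 S. w P * e j P) = 0" .
    qed
    hence wz: "P \<in> insert P0 S \<Longrightarrow> w P = 0" for P using insert.prems(2)[rule_format, of w P] by simp
    show "\<forall>P\<in>S. w0 P = 0"
    proof
      fix P assume "P \<in> S"
      hence "P \<noteq> P0" using insert(2) by auto
      hence "w P = w0 P" unfolding w_def by simp
      thus "w0 P = 0" using wz \<open>P \<in> S\<close> by simp
    qed
  qed
  then obtain c' where c': "\<forall>Q\<in>S. t Q - (t P0 / e j0 P0) * e j0 Q = (\<Sum>j\<in>J. c' j * e' j Q)" by auto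
  define k where "k = t P0 / e j0 P0 - (\<Sum>j\<in>J. c' j * l j)"
  define c where "c j = c' j + (if j = j0 then k else 0)" for j
  have rep: "(\<Sum>j\<in>J. c j * e j Q) = (\<Sum>j\<in>J. c' j * e' j Q) + (t P0 / e j0 P0) * e j0 Q" for Q
  proof -
    have "(\<Sum>j\<in>J. c j * e j Q) = (\<Sum>j\<in>J. c' j * e j Q) + (\<Sum>j\<in>J. (if j = j0 then k else 0) * e j Q)"
      unfolding c_def by (simp add: distrib_right sum.distrib)
    also have "(\<Sum>j\<in>J. (if j = j0 then k else 0) * e j Q) = (\<Sum>j\<in>J. if j = j0 then k * e j Q else 0)"
      by (rule sum.cong) auto
    also have "\<dots> = k * e j0 Q" using j0 insert.prems(1) by simp
    also have "(\<Sum>j\<in>J. c' j * e j Q) = (\<Sum>j\<in>J. c' j * e' j Q) + (\<Sum>j\<in>J. c' j * l j) * e j0 Q"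
    proof -
      have pt: "c' j * e j Q = c' j * e' j Q + c' j * l j * e j0 Q" for j
        unfolding e'_def by (simp add: algebra_simps)
      show ?thesis by (simp only: pt sum.distrib sum_distrib_right)
    qed
    finally show ?thesis unfolding k_def by (simp add: algebra_simps)
  qed
  show ?case
  proof (intro exI[of _ c] ballI)
    fix Q assume Q: "Q \<in> insert P0 S"
    show "t Q = (\<Sum>j\<in>J. c j * e j Q)"
    proof (cases "Q = P0")
      case True thus ?thesis using rep j0 by (simp add: e'P0)
    next
      case False
      hence "Q \<in> S" using Q by simp
      thus ?thesis using rep c' by (simp add: algebra_simps)
    qed
  qed
qed

context herm begin

definition madd :: "nat \<times> nat \<Rightarrow> nat \<times> nat \<Rightarrow> nat \<times> nat" where
  "madd \<mu> \<nu> = (fst \<mu> + fst \<nu>, snd \<mu> + snd \<nu>)"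

lemma mono_madd: "mono \<mu> P * mono \<nu> P = mono (madd \<mu> \<nu>) P"
  unfolding madd_def by (rule mono_add)
lemma rho_madd: "rho (madd \<mu> \<nu>) = rho \<mu> + rho \<nu>"
  unfolding madd_def by (rule rho_add)

lemma sum_H_low': "rho \<mu> < rmax \<Longrightarrow> (\<Sum>P\<in>H. mono \<mu> P) = 0"
  using sum_H_low by (cases \<mu>) auto
lemma sum_H_top': "rho \<mu> = rmax \<Longrightarrow> (\<Sum>P\<in>H. mono \<mu> P) = -1"
  using sum_H_top by (cases \<mu>) auto

lemma mono_reduce':
  "\<exists>\<nu>' g. snd \<nu>' < q \<and> rho \<nu>' = rho \<nu> \<and> inV (rho \<nu> - 1) g \<and> (\<forall>P\<in>H. mono \<nu> P = mono \<nu>' P + g P)"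
proof -
  obtain A B where AB: "\<nu> = (A, B)" by (cases \<nu>)
  obtain g where g: "inV (rho (A, B) - 1) g"
    "\<forall>P\<in>H. mono (A, B) P = mono (A + (q + 1) * (B div q), B mod q) P + g P"
    using mono_reduce by blast
  have "rho (A + (q + 1) * (B div q), B mod q) = rho (A, B)"
  proof -
    define d where "d = B div q"
    define r where "r = B mod q"
    have B: "B = q * d + r" unfolding d_def r_def by simp
    have "rho (A + (q + 1) * (B div q), B mod q) = q * (A + (q + 1) * d) + (q + 1) * r" unfolding rho_def d_def r_def by simp
    moreover have "rho (A, B) = q * A + (q + 1) * (q * d + r)" unfolding rho_def using B by simp
    ultimately show ?thesis by (simp add: algebra_simps)
  qed
  thus ?thesis using g AB q_pos by (intro exI[of _ "(A + (q + 1) * (B div q), B mod q)"] exI[of _ g]) auto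
qed

lemma orth_all_zero:
  assumes orth: "\<forall>\<mu>. snd \<mu> < q \<longrightarrow> (\<Sum>P\<in>H. w P * mono \<mu> P) = 0"
  shows "\<forall>P\<in>H. w P = 0"
proof
  fix P0 assume P0: "P0 \<in> H"
  obtain c d where cd: "P0 = (c, d)" by (cases P0)
  have uv: "(\<Sum>P\<in>H. w P * (poly u (fst P) * poly v (snd P))) = 0" if dv: "degree v < q" for u v
  proof -
    have "(\<Sum>P\<in>H. w P * (poly u (fst P) * poly v (snd P)))
        = (\<Sum>P\<in>H. \<Sum>j\<le>degree v. \<Sum>i\<le>degree u. coeff u i * coeff v j * (w P * mono (i, j) P))"
      by (simp add: poly_altdef sum_product sum_distrib_left mono_def algebra_simps)
    also have "\<dots> = (\<Sum>j\<le>degree v. \<Sum>i\<le>degree u. \<Sum>P\<in>H. coeff u i * coeff v j * (w P * mono (i, j) P))"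
      by (simp add: sum.swap[of _ H])
    also have "\<dots> = (\<Sum>j\<le>degree v. \<Sum>i\<le>degree u. coeff u i * coeff v j * (\<Sum>P\<in>H. w P * mono (i, j) P))"
      by (simp add: sum_distrib_left)
    also have "\<dots> = 0" using orth dv by (intro sum.neutral ballI) auto
    finally show ?thesis .
  qed
  have "q \<le> q ^ 2" by (rule self_le_power) (use q_pos in auto)
  hence c2: "CARD('a) \<ge> 2" using card q_ge2 by simp
  let ?u = "1 - [:- c, 1:] ^ (CARD('a) - 1)"
  have pu: "poly ?u x = (if x = c then 1 else 0)" for x
  proof (cases "x = c")
    case True thus ?thesis using c2 by simp
  next
    case False
    hence "(x - c) ^ (CARD('a) - 1) = 1" using pow_card_minus1[of "x - c"] by simp
    thus ?thesis using False by simp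
  qed
  let ?F = "fib (c ^ (q + 1)) - {d}"
  let ?v = "\<Prod>d'\<in>?F. [:- d', 1:]"
  have dF: "d \<in> fib (c ^ (q + 1))" using P0 cd unfolding hermitian_affine_def fib_def by simp
  have cF: "card ?F = q - 1" using card_fib[OF norm_in_Fq] dF by simp
  have "degree ?v \<le> (\<Sum>d'\<in>?F. degree [:- d', 1:])"
    using degree_prod_sum_le[of ?F "\<lambda>d'. [:- d', 1:]"] by (simp add: o_def)
  hence dv: "degree ?v < q" using cF q_pos by simp
  have pv: "poly ?v y = (\<Prod>d'\<in>?F. y - d')" for y by (simp add: poly_prod)
  have "(\<Sum>P\<in>H. w P * (poly ?u (fst P) * poly ?v (snd P))) = (\<Sum>x\<in>UNIV. \<Sum>y\<in>fib (x ^ (q + 1)). w (x, y) * (poly ?u x * poly ?v y))"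
    by (simp add: sum_H)
  also have "\<dots> = (\<Sum>x\<in>UNIV. if x = c then (\<Sum>y\<in>fib (x ^ (q + 1)). w (x, y) * poly ?v y) else 0)"
    by (intro sum.cong refl) (simp only: pu, simp)
  also have "\<dots> = (\<Sum>y\<in>fib (c ^ (q + 1)). w (c, y) * poly ?v y)" by simp
  also have "\<dots> = w (c, d) * poly ?v d + (\<Sum>y\<in>?F. w (c, y) * poly ?v y)"
    using dF by (simp add: sum.remove)
  also have "(\<Sum>y\<in>?F. w (c, y) * poly ?v y) = 0"
  proof (intro sum.neutral ballI)
    fix y assume "y \<in> ?F"
    hence "(\<Prod>d'\<in>?F. y - d') = 0" by (intro prod_zero) auto
    thus "w (c, y) * poly ?v y = 0" by (simp only: pv) simp
  qed
  finally have ch: "(\<Sum>P\<in>H. w P * (poly ?u (fst P) * poly ?v (snd P))) = w (c, d) * poly ?v d" by (simp only: add_0_right)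
  hence "w (c, d) * poly ?v d = 0" using uv[OF dv, of ?u] by (simp only:)
  moreover have "poly ?v d \<noteq> 0"
  proof -
    have "(\<Prod>d'\<in>?F. d - d') \<noteq> 0" using prod_zero_iff[of ?F "\<lambda>d'. d - d'"] by auto
    thus ?thesis by (simp only: pv) simp
  qed
  ultimately show "w P0 = 0" using cd by simp
qed

lemma zeros_bound:
  assumes f: "inV s f" and Zs: "Zs \<subseteq> H" "\<forall>P\<in>Zs. f P = 0" "card Zs > s"
  shows "\<forall>P\<in>H. f P = 0"
proof (rule ccontr)
  assume nz: "\<not> ?thesis"
  obtain c where c: "\<forall>P\<in>H. f P = (\<Sum>\<mu>\<in>Mon s. c \<mu> * mono \<mu> P)" using f unfolding inV_def by auto
  define Sup where "Sup = {\<mu>\<in>Mon s. c \<mu> \<noteq> 0}"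
  have fS: "finite Sup" unfolding Sup_def using finite_Mon by simp
  have fH: "\<forall>P\<in>H. f P = (\<Sum>\<mu>\<in>Sup. c \<mu> * mono \<mu> P)"
  proof
    fix P assume "P \<in> H"
    hence "f P = (\<Sum>\<mu>\<in>Mon s. c \<mu> * mono \<mu> P)" using c by simp
    also have "\<dots> = (\<Sum>\<mu>\<in>Sup. c \<mu> * mono \<mu> P)"
      unfolding Sup_def by (rule sum.mono_neutral_right) (use finite_Mon in auto)
    finally show "f P = (\<Sum>\<mu>\<in>Sup. c \<mu> * mono \<mu> P)" .
  qed
  have "Sup \<noteq> {}"
  proof
    assume "Sup = {}"
    hence "\<forall>P\<in>H. f P = 0" using fH by simp
    thus False using nz by simp
  qed
  hence "Max (rho ` Sup) \<in> rho ` Sup" using fS by (intro Max_in) auto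
  then obtain \<psi> where \<psi>: "\<psi> \<in> Sup" "rho \<psi> = Max (rho ` Sup)" by auto
  have \<psi>max: "rho \<mu> \<le> rho \<psi>" if "\<mu> \<in> Sup" for \<mu> using \<psi>(2) fS that by simp
  have snd_lt: "snd \<mu> < q" if "\<mu> \<in> Sup" for \<mu> using that unfolding Sup_def Mon_def by simp
  define sf where "sf = rho \<psi>"
  have "sf \<le> s" using \<psi>(1) unfolding sf_def Sup_def Mon_def by simp
  have "card Zs \<le> card H" using Zs(1) by (intro card_mono) auto
  hence "sf < q ^ 3" using \<open>sf \<le> s\<close> Zs(3) card_H by simp
  hence "sf \<le> rmax" using rmax_gg by simp
  define n where "n = rmax - sf"
  define Z where "Z = {P\<in>H. f P \<noteq> 0}"
  define a where "a \<sigma> P = f P * mono (rep \<sigma>) P" for \<sigma> P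
  define b where "b \<tau> P = mono (rep (n - \<tau>)) P" for \<tau> P
  have entry: "(\<Sum>P\<in>Z. a \<sigma> P * b \<tau> P) = (\<Sum>\<mu>\<in>Sup. c \<mu> * (\<Sum>P\<in>H. mono (madd \<mu> (madd (rep \<sigma>) (rep (n - \<tau>)))) P))" for \<sigma> \<tau>
  proof -
    have "(\<Sum>P\<in>Z. a \<sigma> P * b \<tau> P) = (\<Sum>P\<in>H. a \<sigma> P * b \<tau> P)"
      unfolding Z_def a_def by (rule sum.mono_neutral_left) auto
    also have "\<dots> = (\<Sum>P\<in>H. \<Sum>\<mu>\<in>Sup. c \<mu> * mono (madd \<mu> (madd (rep \<sigma>) (rep (n - \<tau>)))) P)"
      unfolding a_def b_def
      by (intro sum.cong refl) (simp add: fH sum_distrib_left mono_madd[symmetric] mult_ac)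
    also have "\<dots> = (\<Sum>\<mu>\<in>Sup. c \<mu> * (\<Sum>P\<in>H. mono (madd \<mu> (madd (rep \<sigma>) (rep (n - \<tau>)))) P))"
      by (subst sum.swap) (simp add: sum_distrib_left)
    finally show ?thesis .
  qed
  have rho_e: "rho (madd \<mu> (madd (rep \<sigma>) (rep (n - \<tau>)))) = rho \<mu> + \<sigma> + (n - \<tau>)"
    if "\<sigma> \<in> pairs n" "\<tau> \<in> pairs n" for \<mu> \<sigma> \<tau>
    using that unfolding pairs_def by (simp add: rho_madd rho_rep)
  have "card (pairs n) \<le> card Z"
  proof (rule tri_rank)
    show "finite Z" unfolding Z_def by simp
    show "finite (pairs n)" by (rule finite_pairs)
    show "\<forall>i\<in>pairs n. \<forall>j\<in>pairs n. i < j \<longrightarrow> (\<Sum>P\<in>Z. a i P * b j P) = 0"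
    proof (intro ballI impI)
      fix i j assume ij: "i \<in> pairs n" "j \<in> pairs n" "i < j"
      have "j \<le> n" using ij unfolding pairs_def by simp
      have "(\<Sum>P\<in>H. mono (madd \<mu> (madd (rep i) (rep (n - j)))) P) = 0" if "\<mu> \<in> Sup" for \<mu>
      proof (rule sum_H_low')
        show "rho (madd \<mu> (madd (rep i) (rep (n - j)))) < rmax"
          using rho_e[OF ij(1,2)] \<psi>max[OF that] ij(3) \<open>j \<le> n\<close> \<open>sf \<le> rmax\<close> unfolding n_def sf_def by simp
      qed
      thus "(\<Sum>P\<in>Z. a i P * b j P) = 0" unfolding entry by simp
    qed
    show "\<forall>i\<in>pairs n. (\<Sum>P\<in>Z. a i P * b i P) \<noteq> 0"
    proof
      fix i assume i: "i \<in> pairs n"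
      have "i \<le> n" using i unfolding pairs_def by simp
      have z: "(\<Sum>P\<in>H. mono (madd \<mu> (madd (rep i) (rep (n - i)))) P) = (if \<mu> = \<psi> then -1 else 0)"
        if "\<mu> \<in> Sup" for \<mu>
      proof (cases "\<mu> = \<psi>")
        case True
        thus ?thesis using rho_e[OF i i] \<open>i \<le> n\<close> \<open>sf \<le> rmax\<close> unfolding n_def sf_def
          by (simp add: sum_H_top')
      next
        case False
        have "rho \<mu> \<noteq> rho \<psi>" using rho_inj[OF snd_lt[OF that] snd_lt[OF \<psi>(1)]] False by auto
        hence "rho \<mu> < rho \<psi>" using \<psi>max[OF that] by simp
        thus ?thesis using False rho_e[OF i i] \<open>i \<le> n\<close> \<open>sf \<le> rmax\<close> unfolding n_def sf_def
          by (simp add: sum_H_low')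
      qed
      have "(\<Sum>P\<in>Z. a i P * b i P) = (\<Sum>\<mu>\<in>Sup. c \<mu> * (if \<mu> = \<psi> then -1 else 0))"
        unfolding entry using z by simp
      also have "\<dots> = - c \<psi>" using \<psi>(1) fS by (simp add: if_distrib cong: if_cong)
      finally show "(\<Sum>P\<in>Z. a i P * b i P) \<noteq> 0" using \<psi>(1) unfolding Sup_def by simp
    qed
  qed
  moreover have "n + 1 \<le> card (pairs n) + 2 * gg" by (rule card_pairs)
  ultimately have A: "q ^ 3 \<le> card Z + sf" using rmax_gg \<open>sf \<le> rmax\<close> unfolding n_def by simp
  have "Zs \<subseteq> H - Z" using Zs unfolding Z_def by auto
  hence "card Zs \<le> card (H - Z)" by (intro card_mono) auto
  moreover have "card (H - Z) = card H - card Z" unfolding Z_def by (intro card_Diff_subset) auto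
  ultimately have "card Zs \<le> card H - card Z" by simp
  thus False using A card_H Zs(3) \<open>sf \<le> s\<close> by simp
qed

lemma dual_bound:
  assumes orth: "\<forall>\<mu>\<in>Mon s. (\<Sum>P\<in>H. w P * mono \<mu> P) = 0" and nz: "\<exists>P\<in>H. w P \<noteq> 0"
  shows "s + 2 \<le> card {P\<in>H. w P \<noteq> 0} + 2 * gg"
proof -
  have "\<exists>\<mu>. snd \<mu> < q \<and> (\<Sum>P\<in>H. w P * mono \<mu> P) \<noteq> 0"
    using orth_all_zero[of w] nz by blast
  hence ex: "\<exists>k. \<exists>\<mu>. snd \<mu> < q \<and> (\<Sum>P\<in>H. w P * mono \<mu> P) \<noteq> 0 \<and> rho \<mu> = k" by blast
  define n where "n = (LEAST k. \<exists>\<mu>. snd \<mu> < q \<and> (\<Sum>P\<in>H. w P * mono \<mu> P) \<noteq> 0 \<and> rho \<mu> = k)"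
  obtain \<mu>0 where \<mu>0: "snd \<mu>0 < q" "(\<Sum>P\<in>H. w P * mono \<mu>0 P) \<noteq> 0" "rho \<mu>0 = n"
    using LeastI_ex[OF ex] unfolding n_def by blast
  have low: "(\<Sum>P\<in>H. w P * mono \<mu> P) = 0" if "snd \<mu> < q" "rho \<mu> < n" for \<mu>
    using not_less_Least[of "rho \<mu>"] that unfolding n_def by blast
  have "s < n"
  proof (rule ccontr)
    assume "\<not> s < n"
    hence "\<mu>0 \<in> Mon s" using \<mu>0 unfolding Mon_def by simp
    thus False using orth \<mu>0 by simp
  qed
  have lowV: "(\<Sum>P\<in>H. w P * g P) = 0" if gV: "inV (n - 1) g" for g
  proof -
    obtain c where c: "\<forall>P\<in>H. g P = (\<Sum>\<mu>\<in>Mon (n - 1). c \<mu> * mono \<mu> P)" using gV unfolding inV_def by auto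
    have "(\<Sum>P\<in>H. w P * g P) = (\<Sum>P\<in>H. \<Sum>\<mu>\<in>Mon (n - 1). c \<mu> * (w P * mono \<mu> P))"
      using c by (simp add: sum_distrib_left algebra_simps)
    also have "\<dots> = (\<Sum>\<mu>\<in>Mon (n - 1). c \<mu> * (\<Sum>P\<in>H. w P * mono \<mu> P))"
      by (subst sum.swap) (simp add: sum_distrib_left)
    also have "\<dots> = 0"
    proof (intro sum.neutral ballI)
      fix \<mu> assume "\<mu> \<in> Mon (n - 1)"
      hence "snd \<mu> < q" "rho \<mu> < n" using \<open>s < n\<close> unfolding Mon_def by auto
      thus "c \<mu> * (\<Sum>P\<in>H. w P * mono \<mu> P) = 0" using low by simp
    qed
    finally show ?thesis .
  qed
  have any_low: "(\<Sum>P\<in>H. w P * mono \<nu> P) = 0" if "rho \<nu> < n" for \<nu>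
  proof -
    have "inV (rho \<nu>) (mono \<nu>)" using inV_mono_any by (cases \<nu>) auto
    moreover have "rho \<nu> \<le> n - 1" using that by simp
    ultimately have "inV (n - 1) (mono \<nu>)" by (rule inV_mono)
    thus ?thesis using lowV by simp
  qed
  have any_top: "(\<Sum>P\<in>H. w P * mono \<nu> P) = (\<Sum>P\<in>H. w P * mono \<mu>0 P)" if "rho \<nu> = n" for \<nu>
  proof -
    obtain \<nu>' g where ng: "snd \<nu>' < q" "rho \<nu>' = rho \<nu>" "inV (rho \<nu> - 1) g" "\<forall>P\<in>H. mono \<nu> P = mono \<nu>' P + g P"
      using mono_reduce'[of \<nu>] by blast
    have "\<nu>' = \<mu>0" using rho_inj[OF ng(1) \<mu>0(1)] ng(2) that \<mu>0(3) by simp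
    have "(\<Sum>P\<in>H. w P * mono \<nu> P) = (\<Sum>P\<in>H. w P * mono \<nu>' P) + (\<Sum>P\<in>H. w P * g P)"
      using ng(4) by (simp add: algebra_simps sum.distrib)
    also have "(\<Sum>P\<in>H. w P * g P) = 0" using lowV ng(3) that by simp
    finally show ?thesis using \<open>\<nu>' = \<mu>0\<close> by simp
  qed
  define Z where "Z = {P\<in>H. w P \<noteq> 0}"
  define a where "a \<sigma> P = w P * mono (rep \<sigma>) P" for \<sigma> P
  define b where "b \<tau> P = mono (rep (n - \<tau>)) P" for \<tau> P
  have entry: "(\<Sum>P\<in>Z. a \<sigma> P * b \<tau> P) = (\<Sum>P\<in>H. w P * mono (madd (rep \<sigma>) (rep (n - \<tau>))) P)" for \<sigma> \<tau>
  proof -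
    have "(\<Sum>P\<in>Z. a \<sigma> P * b \<tau> P) = (\<Sum>P\<in>H. a \<sigma> P * b \<tau> P)"
      unfolding Z_def a_def by (rule sum.mono_neutral_left) auto
    thus ?thesis unfolding a_def b_def by (simp add: mono_madd[symmetric] algebra_simps)
  qed
  have rho_e: "rho (madd (rep \<sigma>) (rep (n - \<tau>))) = \<sigma> + (n - \<tau>)"
    if "\<sigma> \<in> pairs n" "\<tau> \<in> pairs n" for \<sigma> \<tau>
    using that unfolding pairs_def by (simp add: rho_madd rho_rep)
  have "card (pairs n) \<le> card Z"
  proof (rule tri_rank)
    show "finite Z" unfolding Z_def by simp
    show "finite (pairs n)" by (rule finite_pairs)
    show "\<forall>i\<in>pairs n. \<forall>j\<in>pairs n. i < j \<longrightarrow> (\<Sum>P\<in>Z. a i P * b j P) = 0"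
    proof (intro ballI impI)
      fix i j assume ij: "i \<in> pairs n" "j \<in> pairs n" "i < j"
      have "j \<le> n" using ij unfolding pairs_def by simp
      thus "(\<Sum>P\<in>Z. a i P * b j P) = 0" unfolding entry
        using any_low rho_e[OF ij(1,2)] ij(3) by simp
    qed
    show "\<forall>i\<in>pairs n. (\<Sum>P\<in>Z. a i P * b i P) \<noteq> 0"
    proof
      fix i assume i: "i \<in> pairs n"
      have "i \<le> n" using i unfolding pairs_def by simp
      thus "(\<Sum>P\<in>Z. a i P * b i P) \<noteq> 0" unfolding entry
        using any_top rho_e[OF i i] \<mu>0(2) by simp
    qed
  qed
  moreover have "n + 1 \<le> card (pairs n) + 2 * gg" by (rule card_pairs)
  ultimately show ?thesis using \<open>s < n\<close> unfolding Z_def by simp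
qed

lemma interp_H:
  assumes "S \<subseteq> H" "card S + 2 * gg \<le> s + 1"
  shows "\<exists>c. \<forall>P\<in>S. t P = (\<Sum>\<mu>\<in>Mon s. c \<mu> * mono \<mu> P)"
proof (rule interp_gen)
  show "finite S" by (rule finite_subset[OF assms(1)]) simp
  show "finite (Mon s)" by (rule finite_Mon)
  show "\<forall>w. (\<forall>j\<in>Mon s. (\<Sum>P\<in>S. w P * mono j P) = 0) \<longrightarrow> (\<forall>P\<in>S. w P = 0)"
  proof (intro allI impI)
    fix w assume w: "\<forall>j\<in>Mon s. (\<Sum>P\<in>S. w P * mono j P) = 0"
    define w' where "w' P = (if P \<in> S then w P else 0)" for P
    have "(\<Sum>P\<in>H. w' P * mono j P) = (\<Sum>P\<in>S. w P * mono j P)" for j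
    proof -
      have "(\<Sum>P\<in>H. w' P * mono j P) = (\<Sum>P\<in>S. w' P * mono j P)"
        unfolding w'_def by (rule sum.mono_neutral_right) (use assms(1) in auto)
      thus ?thesis unfolding w'_def by simp
    qed
    hence orth: "\<forall>j\<in>Mon s. (\<Sum>P\<in>H. w' P * mono j P) = 0" using w by simp
    show "\<forall>P\<in>S. w P = 0"
    proof (rule ccontr)
      assume "\<not> ?thesis"
      hence "\<exists>P\<in>H. w' P \<noteq> 0" using assms(1) unfolding w'_def by auto
      from dual_bound[OF orth this] have "s + 2 \<le> card {P \<in> H. w' P \<noteq> 0} + 2 * gg" .
      moreover have "card {P \<in> H. w' P \<noteq> 0} \<le> card S"
        using \<open>finite S\<close> unfolding w'_def by (intro card_mono) auto
      ultimately show False using assms(2) by simp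
    qed
  qed
qed

end

definition shiftf :: "'i set \<Rightarrow> ('i \<Rightarrow> 'a::ab_group_add) \<Rightarrow> ('i \<Rightarrow> 'a) \<Rightarrow> ('i \<Rightarrow> 'a)" where
  "shiftf I \<delta> Z = (\<lambda>\<tau>. if \<tau> \<in> I then Z \<tau> + \<delta> \<tau> else undefined)"

lemma PiE_UNIV_ne: "PiE I (\<lambda>_. UNIV) \<noteq> {}" by (simp add: PiE_eq_empty_iff)

lemma finite_PiE_UNIV: "finite I \<Longrightarrow> finite (PiE I (\<lambda>_. UNIV :: 'a::finite set))"
  by (intro finite_PiE) auto

lemma shift_pmf:
  assumes "finite I"
  shows "map_pmf (shiftf I \<delta>) (pmf_of_set (PiE I (\<lambda>_. UNIV :: 'a::{finite,ab_group_add} set))) = pmf_of_set (PiE I (\<lambda>_. UNIV))"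
proof -
  let ?A = "PiE I (\<lambda>_. UNIV :: 'a set)"
  have inj: "inj_on (shiftf I \<delta>) ?A"
  proof (rule inj_onI)
    fix Z Z' assume Z: "Z \<in> ?A" "Z' \<in> ?A" and e: "shiftf I \<delta> Z = shiftf I \<delta> Z'"
    show "Z = Z'"
    proof (rule ext)
      fix \<tau> show "Z \<tau> = Z' \<tau>"
      proof (cases "\<tau> \<in> I")
        case True
        have "shiftf I \<delta> Z \<tau> = shiftf I \<delta> Z' \<tau>" using e by simp
        thus ?thesis using True unfolding shiftf_def by simp
      next
        case False thus ?thesis using PiE_arb[OF Z(1) False] PiE_arb[OF Z(2) False] by simp
      qed
    qed
  qed
  have img: "shiftf I \<delta> ` ?A = ?A"
  proof
    show "shiftf I \<delta> ` ?A \<subseteq> ?A"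
    proof
      fix Y assume "Y \<in> shiftf I \<delta> ` ?A"
      then obtain Z where "Y = shiftf I \<delta> Z" by auto
      thus "Y \<in> ?A" by (simp add: shiftf_def PiE_iff extensional_def)
    qed
    show "?A \<subseteq> shiftf I \<delta> ` ?A"
    proof
      fix Z assume Z: "Z \<in> ?A"
      let ?Z' = "\<lambda>\<tau>. if \<tau> \<in> I then Z \<tau> - \<delta> \<tau> else undefined"
      have "shiftf I \<delta> ?Z' = Z" by (rule ext) (simp add: shiftf_def PiE_arb[OF Z])
      moreover have "?Z' \<in> ?A" by (simp add: PiE_iff extensional_def)
      ultimately show "Z \<in> shiftf I \<delta> ` ?A" by (rule image_eqI[OF sym])
    qed
  qed
  show ?thesis using map_pmf_of_set_inj[OF inj PiE_UNIV_ne finite_PiE_UNIV[OF assms]] img by simp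
qed

lemma mask_lemma:
  fixes F1 F2 :: "('i \<Rightarrow> 'a::{finite,ab_group_add}) \<Rightarrow> 'b"
  assumes "finite I" and "\<And>Z. Z \<in> PiE I (\<lambda>_. UNIV) \<Longrightarrow> F1 Z = F2 (shiftf I \<delta> Z)"
  shows "map_pmf F1 (pmf_of_set (PiE I (\<lambda>_. UNIV))) = map_pmf F2 (pmf_of_set (PiE I (\<lambda>_. UNIV)))"
proof -
  let ?U = "pmf_of_set (PiE I (\<lambda>_. UNIV :: 'a set))"
  have "map_pmf F1 ?U = map_pmf (\<lambda>Z. F2 (shiftf I \<delta> Z)) ?U"
  proof (rule map_pmf_cong[OF refl])
    fix Z assume "Z \<in> set_pmf ?U"
    hence "Z \<in> PiE I (\<lambda>_. UNIV :: 'a set)"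
      using set_pmf_of_set[OF PiE_UNIV_ne finite_PiE_UNIV[OF assms(1)]] by blast
    thus "F1 Z = F2 (shiftf I \<delta> Z)" by (rule assms(2))
  qed
  also have "\<dots> = map_pmf F2 (map_pmf (shiftf I \<delta>) ?U)" by (simp add: map_pmf_comp)
  also have "\<dots> = map_pmf F2 ?U" by (simp only: shift_pmf[OF assms(1), of \<delta>])
  finally show ?thesis .
qed

lemma sum_list_zip_map:
  "sum_list (map (\<lambda>(a, b). a * b) (zip (map f xs) (map g xs))) = sum_list (map (\<lambda>x. f x * g x) xs)"
  by (induction xs) auto

definition enum_of :: "'i set \<Rightarrow> 'i list" where "enum_of A = (SOME xs. set xs = A)"

lemma set_enum_of: "finite A \<Longrightarrow> set (enum_of A) = A"
  unfolding enum_of_def by (rule someI_ex) (rule finite_list)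

definition dec :: "'i list \<Rightarrow> 'a list \<Rightarrow> 'i \<Rightarrow> 'a" where
  "dec xs r \<tau> = the (map_of (zip xs r) \<tau>)"

lemma dec_enc: "\<tau> \<in> set xs \<Longrightarrow> dec xs (map Z xs) \<tau> = Z \<tau>"
  unfolding dec_def by (simp add: map_of_zip_map)

locale xst = herm q TY for q and TY :: "'a::{finite,field} itself" +
  fixes L X T m N :: nat and \<alpha> :: "nat \<Rightarrow> 'a" and P :: "nat \<Rightarrow> nat \<Rightarrow> 'a \<times> 'a" and R :: "nat \<Rightarrow> 'a \<times> 'a"
  assumes Xpos: "X > 0" and Tpos: "T > 0"
    and Lm: "L \<le> q * m"
    and \<alpha>inj: "inj_on \<alpha> {1..m}"
    and Ppts: "\<forall>i\<in>{1..m}. \<forall>z\<in>{1..q}. P i z \<in> H \<and> fst (P i z) = \<alpha> i"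
    and Pinj: "inj_on (\<lambda>(i, z). P i z) ({1..m} \<times> {1..q})"
    and Rinj: "inj_on R {1..N}" and RH: "R ` {1..N} \<subseteq> H"
    and Rx: "\<forall>n\<in>{1..N}. \<forall>i\<in>{1..m}. fst (R n) \<noteq> \<alpha> i"
    and Nbig: "q * m + ((X + 2 * gg - 1) + (T + 2 * gg - 1) + q) < N"
begin

definition sX where "sX = X + 2 * gg - 1"
definition sT where "sT = T + 2 * gg - 1"
definition sI where "sI = sX + sT + q"
definition bb :: "nat \<Rightarrow> nat" where "bb l = l mod q"
definition ii :: "nat \<Rightarrow> nat" where "ii l = l div q + 1"
definition Pp :: "'a poly" where "Pp = (\<Prod>i\<in>{1..m}. [:- \<alpha> i, 1:])"
definition Pi :: "nat \<Rightarrow> 'a poly" where "Pi i = (\<Prod>i'\<in>{1..m} - {i}. [:- \<alpha> i', 1:])"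

lemma ii_range: "l < L \<Longrightarrow> ii l \<in> {1..m}"
proof -
  assume "l < L"
  hence "l < q * m" using Lm by simp
  hence "l div q < m" using q_pos by (simp add: less_mult_imp_div_less mult.commute)
  thus "ii l \<in> {1..m}" unfolding ii_def by simp
qed

lemma bb_lt: "bb l < q" unfolding bb_def using q_pos by simp

lemma poly_Pp: "i \<in> {1..m} \<Longrightarrow> poly Pp x = (x - \<alpha> i) * poly (Pi i) x"
proof -
  assume i: "i \<in> {1..m}"
  have E: "Pp = [:- \<alpha> i, 1:] * Pi i"
    unfolding Pp_def Pi_def using prod.remove[of "{1..m}" i "\<lambda>i. [:- \<alpha> i, 1:]"] i by simp
  show ?thesis by (simp only: E poly_mult) (simp add: algebra_simps)
qed

lemma poly_Pp_alpha: "i \<in> {1..m} \<Longrightarrow> poly Pp (\<alpha> i) = 0"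
  using poly_Pp[of i "\<alpha> i"] by simp

lemma poly_Pi_alpha_other: "i \<in> {1..m} \<Longrightarrow> i' \<in> {1..m} \<Longrightarrow> i' \<noteq> i \<Longrightarrow> poly (Pi i') (\<alpha> i) = 0"
proof -
  assume a: "i \<in> {1..m}" "i' \<in> {1..m}" "i' \<noteq> i"
  have "(\<Prod>j\<in>{1..m} - {i'}. poly [:- \<alpha> j, 1:] (\<alpha> i)) = 0"
    by (rule prod_zero) (use a in auto)
  thus ?thesis unfolding Pi_def poly_prod .
qed

lemma poly_Pi_alpha_self: "i \<in> {1..m} \<Longrightarrow> poly (Pi i) (\<alpha> i) \<noteq> 0"
proof -
  assume i: "i \<in> {1..m}"
  have "\<alpha> i - \<alpha> i' \<noteq> 0" if i': "i' \<in> {1..m} - {i}" for i'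
  proof
    assume "\<alpha> i - \<alpha> i' = 0"
    hence "i = i'" using inj_onD[OF \<alpha>inj, of i i'] i i' by simp
    thus False using i' by simp
  qed
  thus ?thesis unfolding Pi_def poly_prod by (simp add: prod_zero_iff)
qed

lemma poly_Pp_R: "n \<in> {1..N} \<Longrightarrow> poly Pp (fst (R n)) \<noteq> 0"
  unfolding Pp_def poly_prod using Rx by (simp add: prod_zero_iff)

lemma deg_Pp: "degree Pp \<le> m"
proof -
  have "degree Pp \<le> (\<Sum>i\<in>{1..m}. degree [:- \<alpha> i, 1:])"
    unfolding Pp_def using degree_prod_sum_le[of "{1..m}" "\<lambda>i. [:- \<alpha> i, 1:]"] by (simp add: o_def)
  thus ?thesis by simp
qed

lemma deg_Pi: "i \<in> {1..m} \<Longrightarrow> degree (Pi i) \<le> m - 1"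
proof -
  assume i: "i \<in> {1..m}"
  have "degree (Pi i) \<le> (\<Sum>i'\<in>{1..m} - {i}. degree [:- \<alpha> i', 1:])"
    unfolding Pi_def using degree_prod_sum_le[of "{1..m} - {i}" "\<lambda>i. [:- \<alpha> i, 1:]"] by (simp add: o_def)
  thus ?thesis using i by simp
qed

definition good :: "'a list \<Rightarrow> 'a list \<Rightarrow> bool" where
  "good As d \<longleftrightarrow> length d = L \<and> (\<exists>h. inV sI h \<and> (\<forall>n\<in>{1..N}.
      poly Pp (fst (R n)) * As ! (n - 1) =
      (\<Sum>l<L. d ! l * snd (R n) ^ bb l * poly (Pi (ii l)) (fst (R n))) + poly Pp (fst (R n)) * h (R n)))"

lemma good_unique:
  assumes "good As d" "good As d'"
  shows "d = d'"
proof -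
  obtain h where h: "inV sI h" "\<forall>n\<in>{1..N}. poly Pp (fst (R n)) * As ! (n - 1) =
      (\<Sum>l<L. d ! l * snd (R n) ^ bb l * poly (Pi (ii l)) (fst (R n))) + poly Pp (fst (R n)) * h (R n)"
    using assms(1) unfolding good_def by auto
  obtain h' where h': "inV sI h'" "\<forall>n\<in>{1..N}. poly Pp (fst (R n)) * As ! (n - 1) =
      (\<Sum>l<L. d' ! l * snd (R n) ^ bb l * poly (Pi (ii l)) (fst (R n))) + poly Pp (fst (R n)) * h' (R n)"
    using assms(2) unfolding good_def by auto
  have len: "length d = L" "length d' = L" using assms unfolding good_def by auto
  define F where "F Q = (\<Sum>l<L. (d ! l - d' ! l) * snd Q ^ bb l * poly (Pi (ii l)) (fst Q)) + poly Pp (fst Q) * (h Q - h' Q)" for Q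
  have FV: "inV (q * m + sI) F"
  proof -
    have t1: "inV (q * m + sI) (\<lambda>Q. (d ! l - d' ! l) * snd Q ^ bb l * poly (Pi (ii l)) (fst Q))" if l: "l < L" for l
    proof -
      have a: "inV ((q + 1) * bb l) (\<lambda>Q. snd Q ^ bb l)" by (rule inV_ypow)
      have b: "inV (q * (m - 1)) (\<lambda>Q. poly (Pi (ii l)) (fst Q))"
        by (rule inV_mono[OF inV_poly_x]) (use deg_Pi[OF ii_range[OF l]] in simp)
      have "inV ((q + 1) * bb l + q * (m - 1)) (\<lambda>Q. snd Q ^ bb l * poly (Pi (ii l)) (fst Q))"
        by (rule inV_mult[OF a b])
      moreover have "(q + 1) * bb l + q * (m - 1) \<le> q * m + sI"
      proof -
        have "(q + 1) * bb l \<le> (q + 1) * (q - 1)" using bb_lt[of l] by (intro mult_le_mono2) simp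
        also have "\<dots> = q * q - 1" by (simp add: algebra_simps)
        also have "\<dots> \<le> q + sI" unfolding sI_def sT_def two_gg using Tpos q_pos
          by (simp add: algebra_simps)
        finally have A: "(q + 1) * bb l \<le> q + sI" .
        have "m \<ge> 1" using ii_range[OF l] by simp
        hence "q * (m - 1) + q = q * m" by (cases m) auto
        thus ?thesis using A by linarith
      qed
      ultimately have "inV (q * m + sI) (\<lambda>Q. snd Q ^ bb l * poly (Pi (ii l)) (fst Q))" by (rule inV_mono)
      from inV_smult[OF this, of "d ! l - d' ! l"] show ?thesis by (simp add: mult.assoc)
    qed
    have t2: "inV (q * m + sI) (\<lambda>Q. poly Pp (fst Q) * (h Q - h' Q))"
    proof -
      have "inV (q * m) (\<lambda>Q. poly Pp (fst Q))" by (rule inV_mono[OF inV_poly_x]) (use deg_Pp in simp)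
      from inV_mult[OF this inV_diff[OF h(1) h'(1)]] show ?thesis .
    qed
    show ?thesis unfolding F_def by (intro inV_add inV_sum t1 t2) simp
  qed
  have Fz: "\<forall>Q\<in>R ` {1..N}. F Q = 0"
  proof
    fix Q assume "Q \<in> R ` {1..N}"
    then obtain n where n: "n \<in> {1..N}" "Q = R n" by auto
    have "(\<Sum>l<L. d ! l * snd Q ^ bb l * poly (Pi (ii l)) (fst Q)) + poly Pp (fst Q) * h Q
        = (\<Sum>l<L. d' ! l * snd Q ^ bb l * poly (Pi (ii l)) (fst Q)) + poly Pp (fst Q) * h' Q"
    proof -
      have e1: "poly Pp (fst (R n)) * As ! (n - 1) =
        (\<Sum>l<L. d ! l * snd (R n) ^ bb l * poly (Pi (ii l)) (fst (R n))) + poly Pp (fst (R n)) * h (R n)"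
        using h(2) n(1) by blast
      have e2: "poly Pp (fst (R n)) * As ! (n - 1) =
        (\<Sum>l<L. d' ! l * snd (R n) ^ bb l * poly (Pi (ii l)) (fst (R n))) + poly Pp (fst (R n)) * h' (R n)"
        using h'(2) n(1) by blast
      show ?thesis unfolding n(2) using e1 e2 by simp
    qed
    thus "F Q = 0" unfolding F_def by (simp add: algebra_simps sum_subtractf)
  qed
  have "card (R ` {1..N}) = N" using card_image[OF Rinj] by simp
  hence "\<forall>Q\<in>H. F Q = 0" using zeros_bound[OF FV RH Fz] Nbig unfolding sI_def sX_def sT_def by simp
  show "d = d'"
  proof (rule nth_equalityI)
    show "length d = length d'" using len by simp
    fix l assume l: "l < length d"
    hence lL: "l < L" using len by simp
    define i where "i = ii l"
    have i: "i \<in> {1..m}" using ii_range[OF lL] unfolding i_def .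
    define Li where "Li = {l'. l' < L \<and> ii l' = i}"
    define pp where "pp = (\<Sum>l'\<in>Li. monom (d ! l' - d' ! l') (bb l'))"
    have Lfin: "finite Li" unfolding Li_def by simp
    have pp_eval: "poly pp y * poly (Pi i) (\<alpha> i) = F (\<alpha> i, y)" for y
    proof -
      have "F (\<alpha> i, y) = (\<Sum>l'<L. (d ! l' - d' ! l') * y ^ bb l' * poly (Pi (ii l')) (\<alpha> i))"
        unfolding F_def using poly_Pp_alpha[OF i] by simp
      also have "\<dots> = (\<Sum>l'\<in>Li. (d ! l' - d' ! l') * y ^ bb l' * poly (Pi (ii l')) (\<alpha> i))"
      proof (rule sum.mono_neutral_right)
        show "\<forall>l'\<in>{..<L} - Li. (d ! l' - d' ! l') * y ^ bb l' * poly (Pi (ii l')) (\<alpha> i) = 0"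
          using poly_Pi_alpha_other[OF i ii_range] unfolding Li_def by auto
      qed (auto simp: Li_def)
      also have "\<dots> = (\<Sum>l'\<in>Li. (d ! l' - d' ! l') * y ^ bb l') * poly (Pi i) (\<alpha> i)"
        unfolding Li_def by (simp add: sum_distrib_right)
      finally show ?thesis unfolding pp_def by (simp add: poly_sum poly_monom)
    qed
    have roots: "poly pp (snd (P i z)) = 0" if z: "z \<in> {1..q}" for z
    proof -
      have "P i z \<in> H" "fst (P i z) = \<alpha> i" using Ppts i z by auto
      moreover have "(\<alpha> i, snd (P i z)) = P i z" using \<open>fst (P i z) = \<alpha> i\<close> by (simp add: prod_eq_iff)
      ultimately have "F (\<alpha> i, snd (P i z)) = 0" using \<open>\<forall>Q\<in>H. F Q = 0\<close> by simp
      thus ?thesis using pp_eval[of "snd (P i z)"] poly_Pi_alpha_self[OF i] by simp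
    qed
    have "pp = 0"
    proof (rule ccontr)
      assume nz: "pp \<noteq> 0"
      have dg: "degree pp < q"
      proof -
        have "degree pp \<le> q - 1" unfolding pp_def
        proof (rule degree_sum_le)
          show "finite Li" by (rule Lfin)
          fix p assume "p \<in> Li"
          have "degree (monom (d ! p - d' ! p) (bb p)) \<le> bb p" by (rule degree_monom_le)
          thus "degree (monom (d ! p - d' ! p) (bb p)) \<le> q - 1" using bb_lt[of p] by simp
        qed
        thus ?thesis using q_pos by simp
      qed
      have inj: "inj_on (\<lambda>z. snd (P i z)) {1..q}"
      proof (rule inj_onI)
        fix z z' assume zz: "z \<in> {1..q}" "z' \<in> {1..q}" "snd (P i z) = snd (P i z')"
        moreover have "fst (P i z) = fst (P i z')" using Ppts i zz by simp
        ultimately have "P i z = P i z'" by (simp add: prod_eq_iff)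
        hence "(i, z) = (i, z')" using inj_onD[OF Pinj, of "(i, z)" "(i, z')"] i zz by simp
        thus "z = z'" by simp
      qed
      have "(\<lambda>z. snd (P i z)) ` {1..q} \<subseteq> {y. poly pp y = 0}" using roots by auto
      hence "card ((\<lambda>z. snd (P i z)) ` {1..q}) \<le> card {y. poly pp y = 0}" by (intro card_mono) auto
      also have "\<dots> \<le> degree pp" by (rule card_poly_roots_bound[OF nz])
      finally have "q \<le> degree pp" using card_image[OF inj] by simp
      thus False using dg by simp
    qed
    have "coeff pp (bb l) = d ! l - d' ! l"
    proof -
      have "coeff pp (bb l) = (\<Sum>l'\<in>Li. if bb l' = bb l then d ! l' - d' ! l' else 0)"
        unfolding pp_def by (simp add: coeff_sum coeff_monom)
      also have "\<dots> = (\<Sum>l'\<in>Li. if l' = l then d ! l' - d' ! l' else 0)"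
      proof (rule sum.cong[OF refl])
        fix l' assume "l' \<in> Li"
        hence "l' div q = l div q" unfolding Li_def i_def ii_def by simp
        have "bb l' = bb l \<longleftrightarrow> l' = l"
        proof
          assume "bb l' = bb l"
          hence "l' mod q = l mod q" unfolding bb_def .
          have "l' = l' div q * q + l' mod q" by simp
          also have "\<dots> = l div q * q + l mod q" using \<open>l' div q = l div q\<close> \<open>l' mod q = l mod q\<close> by simp
          also have "\<dots> = l" by simp
          finally show "l' = l" .
        qed simp
        thus "(if bb l' = bb l then d ! l' - d' ! l' else 0) = (if l' = l then d ! l' - d' ! l' else 0)" by simp
      qed
      also have "\<dots> = d ! l - d' ! l"
      proof -
        have "l \<in> Li" unfolding Li_def i_def using lL by simp
        thus ?thesis using Lfin by (simp add: sum.delta)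
      qed
      finally show ?thesis .
    qed
    thus "d ! l = d' ! l" using \<open>pp = 0\<close> by simp
  qed
qed

end

context xst begin

definition JL :: "nat \<Rightarrow> (nat \<times> nat) list" where "JL M = List.product [1..<M+1] [0..<L]"
definition IdxS :: "nat \<Rightarrow> (nat \<times> nat \<times> (nat \<times> nat)) set" where "IdxS M = {1..M} \<times> {0..<L} \<times> Mon sX"
definition IdxT :: "nat \<Rightarrow> (nat \<times> nat \<times> (nat \<times> nat)) set" where "IdxT M = {1..M} \<times> {0..<L} \<times> Mon sT"
definition eS where "eS M = enum_of (IdxS M)"
definition eT where "eT M = enum_of (IdxT M)"

definition ZS :: "(nat \<times> nat \<times> (nat \<times> nat) \<Rightarrow> 'a) \<Rightarrow> nat \<times> nat \<Rightarrow> 'a \<times> 'a \<Rightarrow> 'a" where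
  "ZS Z jl Q = (\<Sum>\<mu>\<in>Mon sX. Z (fst jl, snd jl, \<mu>) * mono \<mu> Q)"
definition ZT :: "(nat \<times> nat \<times> (nat \<times> nat) \<Rightarrow> 'a) \<Rightarrow> nat \<times> nat \<Rightarrow> 'a \<times> 'a \<Rightarrow> 'a" where
  "ZT Z jl Q = (\<Sum>\<mu>\<in>Mon sT. Z (fst jl, snd jl, \<mu>) * mono \<mu> Q)"

definition stE :: "(nat \<Rightarrow> 'a list) \<Rightarrow> (nat \<times> nat \<times> (nat \<times> nat) \<Rightarrow> 'a) \<Rightarrow> nat \<Rightarrow> nat \<times> nat \<Rightarrow> 'a" where
  "stE D Z n jl = D (fst jl) ! snd jl + (fst (R n) - \<alpha> (ii (snd jl))) * ZS Z jl (R n)"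
definition qE :: "nat \<Rightarrow> (nat \<times> nat \<times> (nat \<times> nat) \<Rightarrow> 'a) \<Rightarrow> nat \<Rightarrow> nat \<times> nat \<Rightarrow> 'a" where
  "qE mu Z n jl = (if fst jl = mu then snd (R n) ^ bb (snd jl) / (fst (R n) - \<alpha> (ii (snd jl))) else 0) + ZT Z jl (R n)"

definition store :: "nat \<Rightarrow> nat \<Rightarrow> (nat \<Rightarrow> 'a list) \<Rightarrow> 'a list \<Rightarrow> 'a list" where
  "store M n D r = map (stE D (dec (eS M) r) n) (JL M)"
definition query :: "nat \<Rightarrow> nat \<Rightarrow> nat \<Rightarrow> 'a list \<Rightarrow> 'a list" where
  "query M n mu u = map (qE mu (dec (eT M) u) n) (JL M)"
definition answer :: "nat \<Rightarrow> 'a list \<Rightarrow> 'a list \<Rightarrow> 'a" where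
  "answer n w Qy = sum_list (map (\<lambda>(a, b). a * b) (zip w Qy))"
definition decode :: "nat \<Rightarrow> 'a list \<Rightarrow> 'a list \<Rightarrow> 'a list" where
  "decode mu u As = (SOME d. good As d)"
definition srand :: "nat \<Rightarrow> 'a list pmf" where
  "srand M = map_pmf (\<lambda>Z. map Z (eS M)) (pmf_of_set (PiE (IdxS M) (\<lambda>_. UNIV)))"
definition qrand :: "nat \<Rightarrow> 'a list pmf" where
  "qrand M = map_pmf (\<lambda>Z. map Z (eT M)) (pmf_of_set (PiE (IdxT M) (\<lambda>_. UNIV)))"

lemma finite_IdxS: "finite (IdxS M)" unfolding IdxS_def using finite_Mon by simp
lemma finite_IdxT: "finite (IdxT M)" unfolding IdxT_def using finite_Mon by simp

lemma set_JL: "set (JL M) = {1..M} \<times> {0..<L}" unfolding JL_def by auto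
lemma distinct_JL: "distinct (JL M)" unfolding JL_def by (simp add: distinct_product)

lemma ZS_dec: assumes "jl \<in> {1..M} \<times> {0..<L}" shows "ZS (dec (eS M) (map Z (eS M))) jl Q = ZS Z jl Q"
  unfolding ZS_def
proof (intro sum.cong refl)
  fix \<mu> assume "\<mu> \<in> Mon sX"
  have "set (eS M) = IdxS M" unfolding eS_def by (rule set_enum_of[OF finite_IdxS])
  hence "(fst jl, snd jl, \<mu>) \<in> set (eS M)" using assms \<open>\<mu> \<in> Mon sX\<close> unfolding IdxS_def by auto
  thus "dec (eS M) (map Z (eS M)) (fst jl, snd jl, \<mu>) * mono \<mu> Q = Z (fst jl, snd jl, \<mu>) * mono \<mu> Q"
    by (simp add: dec_enc)
qed

lemma ZT_dec: assumes "jl \<in> {1..M} \<times> {0..<L}" shows "ZT (dec (eT M) (map Z (eT M))) jl Q = ZT Z jl Q"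
  unfolding ZT_def
proof (intro sum.cong refl)
  fix \<mu> assume "\<mu> \<in> Mon sT"
  have "set (eT M) = IdxT M" unfolding eT_def by (rule set_enum_of[OF finite_IdxT])
  hence "(fst jl, snd jl, \<mu>) \<in> set (eT M)" using assms \<open>\<mu> \<in> Mon sT\<close> unfolding IdxT_def by auto
  thus "dec (eT M) (map Z (eT M)) (fst jl, snd jl, \<mu>) * mono \<mu> Q = Z (fst jl, snd jl, \<mu>) * mono \<mu> Q"
    by (simp add: dec_enc)
qed

lemma store_enc: "store M n D (map Z (eS M)) = map (stE D Z n) (JL M)"
  unfolding store_def stE_def using set_JL by (intro map_cong refl) (simp add: ZS_dec)

lemma query_enc: "query M n mu (map Z (eT M)) = map (qE mu Z n) (JL M)"
  unfolding query_def qE_def using set_JL by (intro map_cong refl) (simp add: ZT_dec)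

lemma sX1: "sX + 1 = X + 2 * gg" unfolding sX_def using Xpos by simp
lemma sT1: "sT + 1 = T + 2 * gg" unfolding sT_def using Tpos by simp

lemma inV_ZS: "inV sX (ZS Z jl)" unfolding inV_def ZS_def by (intro exI[of _ "\<lambda>\<mu>. Z (fst jl, snd jl, \<mu>)"]) simp
lemma inV_ZT: "inV sT (ZT Z jl)" unfolding inV_def ZT_def by (intro exI[of _ "\<lambda>\<mu>. Z (fst jl, snd jl, \<mu>)"]) simp

lemma Rx': "n \<in> {1..N} \<Longrightarrow> l < L \<Longrightarrow> fst (R n) - \<alpha> (ii l) \<noteq> 0"
  using Rx ii_range by auto

end

context xst begin

definition hf :: "nat \<Rightarrow> (nat \<Rightarrow> 'a list) \<Rightarrow> nat \<Rightarrow> (nat \<times> nat \<times> (nat \<times> nat) \<Rightarrow> 'a) \<Rightarrow> (nat \<times> nat \<times> (nat \<times> nat) \<Rightarrow> 'a) \<Rightarrow> 'a \<times> 'a \<Rightarrow> 'a" where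
  "hf M D mu Z Z' Q = (\<Sum>l<L. ZS Z (mu, l) Q * snd Q ^ bb l) +
     (\<Sum>jl\<in>{1..M} \<times> {0..<L}. D (fst jl) ! snd jl * ZT Z' jl Q + (fst Q - \<alpha> (ii (snd jl))) * (ZS Z jl Q * ZT Z' jl Q))"

lemma inV_hf: "inV sI (hf M D mu Z Z')"
proof -
  have t1: "inV sI (\<lambda>Q. ZS Z (mu, l) Q * snd Q ^ bb l)" for l
  proof -
    have "inV (sX + (q + 1) * bb l) (\<lambda>Q. ZS Z (mu, l) Q * snd Q ^ bb l)"
      by (rule inV_mult[OF inV_ZS inV_ypow])
    moreover have "sX + (q + 1) * bb l \<le> sI"
    proof -
      have "(q + 1) * bb l \<le> (q + 1) * (q - 1)" using bb_lt[of l] by (intro mult_le_mono2) simp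
      also have "\<dots> = q * q - 1" by (simp add: algebra_simps)
      also have "\<dots> \<le> sT + q" unfolding sT_def two_gg using Tpos q_pos by (simp add: algebra_simps)
      finally show ?thesis unfolding sI_def by simp
    qed
    ultimately show ?thesis by (rule inV_mono)
  qed
  have t2: "inV sI (\<lambda>Q. D (fst jl) ! snd jl * ZT Z' jl Q + (fst Q - \<alpha> (ii (snd jl))) * (ZS Z jl Q * ZT Z' jl Q))" for jl
  proof (rule inV_add)
    show "inV sI (\<lambda>Q. D (fst jl) ! snd jl * ZT Z' jl Q)"
      by (rule inV_smult[OF inV_mono[OF inV_ZT]]) (simp add: sI_def)
    have xa: "inV q (\<lambda>Q. fst Q - \<alpha> (ii (snd jl)))"
    proof -
      have "inV q (\<lambda>Q. fst Q ^ 1)" using inV_xpow[of 1] by simp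
      moreover have "inV q (\<lambda>Q. \<alpha> (ii (snd jl)))" by (rule inV_mono[OF inV_const]) simp
      ultimately show ?thesis using inV_diff by fastforce
    qed
    have "inV (q + (sX + sT)) (\<lambda>Q. (fst Q - \<alpha> (ii (snd jl))) * (ZS Z jl Q * ZT Z' jl Q))"
      by (rule inV_mult[OF xa inV_mult[OF inV_ZS inV_ZT]])
    thus "inV sI (\<lambda>Q. (fst Q - \<alpha> (ii (snd jl))) * (ZS Z jl Q * ZT Z' jl Q))"
      by (rule inV_mono) (simp add: sI_def)
  qed
  show ?thesis unfolding hf_def
    by (rule inV_add; rule inV_sum) (use t1 t2 in auto)
qed

lemma answer_sum:
  "answer n (store M n D (map Z (eS M))) (query M n mu (map Z' (eT M))) =
   (\<Sum>jl\<in>{1..M} \<times> {0..<L}. stE D Z n jl * qE mu Z' n jl)"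
  unfolding answer_def store_enc query_enc sum_list_zip_map
  using sum_list_distinct_conv_sum_set[OF distinct_JL, of "\<lambda>jl. stE D Z n jl * qE mu Z' n jl" M] set_JL by simp

lemma answer_formula:
  assumes n: "n \<in> {1..N}" and mu: "mu \<in> {1..M}"
  shows "poly Pp (fst (R n)) * answer n (store M n D (map Z (eS M))) (query M n mu (map Z' (eT M)))
     = (\<Sum>l<L. D mu ! l * snd (R n) ^ bb l * poly (Pi (ii l)) (fst (R n))) + poly Pp (fst (R n)) * hf M D mu Z Z' (R n)"
proof -
  define x where "x = fst (R n)"
  define y where "y = snd (R n)"
  define a where "a l = \<alpha> (ii l)" for l
  define g where "g l = D mu ! l * y ^ bb l / (x - a l) + ZS Z (mu, l) (R n) * y ^ bb l" for l
  define k where "k jl = D (fst jl) ! snd jl * ZT Z' jl (R n) + (x - a (snd jl)) * (ZS Z jl (R n) * ZT Z' jl (R n))" for jl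
  have trm: "stE D Z n jl * qE mu Z' n jl = (if fst jl = mu then g (snd jl) else 0) + k jl"
    if jl: "jl \<in> {1..M} \<times> {0..<L}" for jl
  proof -
    have "snd jl < L" using jl by auto
    hence nz: "x - a (snd jl) \<noteq> 0" unfolding x_def a_def using Rx'[OF n] by blast
    obtain j l where jl_eq: "jl = (j, l)" by (cases jl)
    show ?thesis
    proof (cases "j = mu")
      case True
      show ?thesis unfolding stE_def qE_def g_def k_def x_def[symmetric] y_def[symmetric] a_def[symmetric]
        using nz unfolding jl_eq True by (simp add: field_simps)
    next
      case False
      show ?thesis unfolding stE_def qE_def g_def k_def x_def[symmetric] y_def[symmetric] a_def[symmetric]
        using nz False unfolding jl_eq by (simp add: field_simps)
    qed
  qed
  have sum_if: "(\<Sum>jl\<in>{1..M} \<times> {0..<L}. if fst jl = mu then g (snd jl) else 0) = (\<Sum>l<L. g l)"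
  proof -
    have "(\<Sum>jl\<in>{1..M} \<times> {0..<L}. if fst jl = mu then g (snd jl) else 0)
        = (\<Sum>j\<in>{1..M}. \<Sum>l\<in>{0..<L}. if j = mu then g l else 0)"
      by (simp add: sum.cartesian_product split_def)
    also have "\<dots> = (\<Sum>j\<in>{1..M}. if j = mu then (\<Sum>l\<in>{0..<L}. g l) else 0)"
      by (intro sum.cong refl) simp
    also have "\<dots> = (\<Sum>l<L. g l)" using mu by (simp add: atLeast0LessThan)
    finally show ?thesis .
  qed
  have ans: "answer n (store M n D (map Z (eS M))) (query M n mu (map Z' (eT M))) = (\<Sum>l<L. g l) + (\<Sum>jl\<in>{1..M} \<times> {0..<L}. k jl)"
    unfolding answer_sum using trm sum_if by (simp add: sum.distrib)
  have pg: "poly Pp x * g l = D mu ! l * y ^ bb l * poly (Pi (ii l)) x + poly Pp x * (ZS Z (mu, l) (R n) * y ^ bb l)" if l: "l < L" for l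
  proof -
    have nz: "x - a l \<noteq> 0" unfolding x_def a_def using Rx'[OF n l] .
    have E: "poly Pp x = (x - a l) * poly (Pi (ii l)) x" unfolding a_def using poly_Pp[OF ii_range[OF l]] .
    show ?thesis unfolding g_def E using nz by (simp add: field_simps)
  qed
  have "poly Pp x * (\<Sum>l<L. g l) = (\<Sum>l<L. D mu ! l * y ^ bb l * poly (Pi (ii l)) x) + poly Pp x * (\<Sum>l<L. ZS Z (mu, l) (R n) * y ^ bb l)"
    by (simp add: sum_distrib_left pg sum.distrib)
  moreover have "hf M D mu Z Z' (R n) = (\<Sum>l<L. ZS Z (mu, l) (R n) * y ^ bb l) + (\<Sum>jl\<in>{1..M} \<times> {0..<L}. k jl)"
    unfolding hf_def k_def x_def y_def a_def by simp
  ultimately show ?thesis unfolding ans x_def[symmetric] y_def[symmetric] by (simp add: algebra_simps)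
qed

end

context xst begin

lemma set_srand: "set_pmf (srand M) = (\<lambda>Z. map Z (eS M)) ` PiE (IdxS M) (\<lambda>_. UNIV)"
proof -
  have "set_pmf (pmf_of_set (PiE (IdxS M) (\<lambda>_. UNIV :: 'a set))) = PiE (IdxS M) (\<lambda>_. UNIV)"
    by (rule set_pmf_of_set) (simp_all add: PiE_UNIV_ne finite_PiE_UNIV finite_IdxS)
  thus ?thesis unfolding srand_def by simp
qed
lemma set_qrand: "set_pmf (qrand M) = (\<lambda>Z. map Z (eT M)) ` PiE (IdxT M) (\<lambda>_. UNIV)"
proof -
  have "set_pmf (pmf_of_set (PiE (IdxT M) (\<lambda>_. UNIV :: 'a set))) = PiE (IdxT M) (\<lambda>_. UNIV)"
    by (rule set_pmf_of_set) (simp_all add: PiE_UNIV_ne finite_PiE_UNIV finite_IdxT)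
  thus ?thesis unfolding qrand_def by simp
qed

lemma correct:
  assumes D: "valid_files M L D" and mu: "mu \<in> {1..M}" and r: "r \<in> set_pmf (srand M)" and u: "u \<in> set_pmf (qrand M)"
  shows "decode mu u (map (\<lambda>n. answer n (store M n D r) (query M n mu u)) [1..<N+1]) = D mu"
proof -
  obtain Z where Z: "r = map Z (eS M)" using r set_srand by auto
  obtain Z' where Z': "u = map Z' (eT M)" using u set_qrand by auto
  define As where "As = map (\<lambda>n. answer n (store M n D r) (query M n mu u)) [1..<N+1]"
  have gd: "good As (D mu)"
    unfolding good_def
  proof (intro conjI exI[of _ "hf M D mu Z Z'"] ballI)
    show "length (D mu) = L" using D mu unfolding valid_files_def by auto
    show "inV sI (hf M D mu Z Z')" by (rule inV_hf)
    fix n assume n: "n \<in> {1..N}"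
    have i: "n - 1 < N" using n by auto
    have e: "[1..<N+1] ! (n - 1) = n" using n by (subst nth_upt) auto
    have "As ! (n - 1) = (\<lambda>n. answer n (store M n D r) (query M n mu u)) ([1..<N+1] ! (n - 1))"
      unfolding As_def using i by (simp del: upt_Suc)
    hence "As ! (n - 1) = answer n (store M n D r) (query M n mu u)" unfolding e .
    thus "poly Pp (fst (R n)) * As ! (n - 1) =
      (\<Sum>l<L. D mu ! l * snd (R n) ^ bb l * poly (Pi (ii l)) (fst (R n))) + poly Pp (fst (R n)) * hf M D mu Z Z' (R n)"
      using answer_formula[OF n mu, of D Z Z'] Z Z' by simp
  qed
  have "good As (decode mu u As)" unfolding decode_def using gd by (rule someI)
  hence "decode mu u As = D mu" using gd good_unique by blast
  thus ?thesis unfolding As_def .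
qed

lemma ZS_shift:
  assumes "jl \<in> {1..M} \<times> {0..<L}"
  shows "ZS (shiftf (IdxS M) \<delta> Z) jl Q = ZS Z jl Q + (\<Sum>\<mu>\<in>Mon sX. \<delta> (fst jl, snd jl, \<mu>) * mono \<mu> Q)"
proof -
  have "ZS (shiftf (IdxS M) \<delta> Z) jl Q = (\<Sum>\<mu>\<in>Mon sX. (Z (fst jl, snd jl, \<mu>) + \<delta> (fst jl, snd jl, \<mu>)) * mono \<mu> Q)"
    unfolding ZS_def shiftf_def using assms by (intro sum.cong refl) (auto simp: IdxS_def)
  thus ?thesis unfolding ZS_def by (simp add: distrib_right sum.distrib)
qed

lemma ZT_shift:
  assumes "jl \<in> {1..M} \<times> {0..<L}"
  shows "ZT (shiftf (IdxT M) \<delta> Z) jl Q = ZT Z jl Q + (\<Sum>\<mu>\<in>Mon sT. \<delta> (fst jl, snd jl, \<mu>) * mono \<mu> Q)"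
proof -
  have "ZT (shiftf (IdxT M) \<delta> Z) jl Q = (\<Sum>\<mu>\<in>Mon sT. (Z (fst jl, snd jl, \<mu>) + \<delta> (fst jl, snd jl, \<mu>)) * mono \<mu> Q)"
    unfolding ZT_def shiftf_def using assms by (intro sum.cong refl) (auto simp: IdxT_def)
  thus ?thesis unfolding ZT_def by (simp add: distrib_right sum.distrib)
qed

lemma interp_servers:
  assumes S: "S \<subseteq> {1..N}" and cS: "card S + 2 * gg \<le> s + 1"
  shows "\<exists>c. \<forall>Q\<in>R ` S. t Q = (\<Sum>\<mu>\<in>Mon s. c \<mu> * mono \<mu> Q)"
proof (rule interp_H)
  show "R ` S \<subseteq> H" using S RH by auto
  have "finite S" using S finite_subset by blast
  hence "card (R ` S) \<le> card S" by (rule card_image_le)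
  thus "card (R ` S) + 2 * gg \<le> s + 1" using cS by simp
qed

lemma secure:
  assumes S: "S \<subseteq> {1..N}" "card S \<le> X"
  shows "map_pmf (\<lambda>r n. if n \<in> S then store M n D r else []) (srand M) =
         map_pmf (\<lambda>r n. if n \<in> S then store M n D' r else []) (srand M)"
proof -
  define tgt where "tgt jl Q = (D (fst jl) ! snd jl - D' (fst jl) ! snd jl) / (fst Q - \<alpha> (ii (snd jl)))" for jl and Q :: "'a \<times> 'a"
  have ex: "\<exists>c. \<forall>Q\<in>R ` S. tgt jl Q = (\<Sum>\<mu>\<in>Mon sX. c \<mu> * mono \<mu> Q)" for jl
    by (rule interp_servers[OF S(1)]) (use S(2) sX1 in simp)
  define cc where "cc jl = (SOME c. \<forall>Q\<in>R ` S. tgt jl Q = (\<Sum>\<mu>\<in>Mon sX. c \<mu> * mono \<mu> Q))" for jl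
  have cc: "\<forall>Q\<in>R ` S. tgt jl Q = (\<Sum>\<mu>\<in>Mon sX. cc jl \<mu> * mono \<mu> Q)" for jl
    unfolding cc_def using someI_ex[OF ex] .
  define \<delta> where "\<delta> \<tau> = cc (fst \<tau>, fst (snd \<tau>)) (snd (snd \<tau>))" for \<tau> :: "nat \<times> nat \<times> (nat \<times> nat)"
  have key: "stE D Z n jl = stE D' (shiftf (IdxS M) \<delta> Z) n jl" if n: "n \<in> S" and jl: "jl \<in> {1..M} \<times> {0..<L}" for Z n jl
  proof -
    have nN: "n \<in> {1..N}" using n S by auto
    have l: "snd jl < L" using jl by auto
    have nz: "fst (R n) - \<alpha> (ii (snd jl)) \<noteq> 0" using Rx'[OF nN l] .
    have "ZS (shiftf (IdxS M) \<delta> Z) jl (R n) = ZS Z jl (R n) + tgt jl (R n)"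
      unfolding ZS_shift[OF jl] using cc[of jl] n unfolding \<delta>_def by simp
    thus ?thesis unfolding stE_def tgt_def using nz by (simp add: field_simps)
  qed
  show ?thesis unfolding srand_def map_pmf_comp
  proof (rule mask_lemma[OF finite_IdxS, where \<delta> = \<delta>])
    fix Z assume "Z \<in> PiE (IdxS M) (\<lambda>_. UNIV :: 'a set)"
    show "(\<lambda>n. if n \<in> S then store M n D (map Z (eS M)) else []) =
          (\<lambda>n. if n \<in> S then store M n D' (map (shiftf (IdxS M) \<delta> Z) (eS M)) else [])"
    proof (rule ext)
      fix n show "(if n \<in> S then store M n D (map Z (eS M)) else []) =
          (if n \<in> S then store M n D' (map (shiftf (IdxS M) \<delta> Z) (eS M)) else [])"
        unfolding store_enc using key set_JL by (auto intro!: map_cong)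
    qed
  qed
qed

lemma privacy_lem:
  assumes S: "S \<subseteq> {1..N}" "card S \<le> T"
  shows "map_pmf (\<lambda>u n. if n \<in> S then query M n mu u else []) (qrand M) =
         map_pmf (\<lambda>u n. if n \<in> S then query M n mu' u else []) (qrand M)"
proof -
  define det where "det mm jl Q = (if fst jl = mm then snd Q ^ bb (snd jl) / (fst Q - \<alpha> (ii (snd jl))) else 0)"
    for mm :: nat and jl :: "nat \<times> nat" and Q :: "'a \<times> 'a"
  define tgt where "tgt jl Q = det mu jl Q - det mu' jl Q" for jl Q
  have ex: "\<exists>c. \<forall>Q\<in>R ` S. tgt jl Q = (\<Sum>\<mu>\<in>Mon sT. c \<mu> * mono \<mu> Q)" for jl
    by (rule interp_servers[OF S(1)]) (use S(2) sT1 in simp)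
  define cc where "cc jl = (SOME c. \<forall>Q\<in>R ` S. tgt jl Q = (\<Sum>\<mu>\<in>Mon sT. c \<mu> * mono \<mu> Q))" for jl
  have cc: "\<forall>Q\<in>R ` S. tgt jl Q = (\<Sum>\<mu>\<in>Mon sT. cc jl \<mu> * mono \<mu> Q)" for jl
    unfolding cc_def using someI_ex[OF ex] .
  define \<delta> where "\<delta> \<tau> = cc (fst \<tau>, fst (snd \<tau>)) (snd (snd \<tau>))" for \<tau> :: "nat \<times> nat \<times> (nat \<times> nat)"
  have key: "qE mu Z n jl = qE mu' (shiftf (IdxT M) \<delta> Z) n jl" if n: "n \<in> S" and jl: "jl \<in> {1..M} \<times> {0..<L}" for Z n jl
  proof -
    have "ZT (shiftf (IdxT M) \<delta> Z) jl (R n) = ZT Z jl (R n) + tgt jl (R n)"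
      unfolding ZT_shift[OF jl] using cc[of jl] n unfolding \<delta>_def by simp
    moreover have "qE mm Z n jl = det mm jl (R n) + ZT Z jl (R n)" for mm Z unfolding qE_def det_def by simp
    ultimately show ?thesis unfolding tgt_def by simp
  qed
  show ?thesis unfolding qrand_def map_pmf_comp
  proof (rule mask_lemma[OF finite_IdxT, where \<delta> = \<delta>])
    fix Z assume "Z \<in> PiE (IdxT M) (\<lambda>_. UNIV :: 'a set)"
    show "(\<lambda>n. if n \<in> S then query M n mu (map Z (eT M)) else []) =
          (\<lambda>n. if n \<in> S then query M n mu' (map (shiftf (IdxT M) \<delta> Z) (eT M)) else [])"
    proof (rule ext)
      fix n show "(if n \<in> S then query M n mu (map Z (eT M)) else []) =
          (if n \<in> S then query M n mu' (map (shiftf (IdxT M) \<delta> Z) (eT M)) else [])"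
        unfolding query_enc using key set_JL by (auto intro!: map_cong)
    qed
  qed
qed

lemma scheme: "XSTPIR N M L X T (srand M) (store M) (qrand M) (query M) answer decode"
  unfolding XSTPIR_def using correct secure privacy_lem by blast

end

theorem theorem3p3:
  fixes q X T L m N :: nat
    and \<alpha> :: "nat \<Rightarrow> 'a::{finite,field}"
    and P :: "nat \<Rightarrow> nat \<Rightarrow> 'a \<times> 'a"
  assumes "\<exists>p k. prime p \<and> k > 0 \<and> q = p ^ k"
    and "CARD('a) = q ^ 2"
    and "X > 0" and "T > 0"
    and "q * (q - 1) div 2 \<le> L" and "L \<le> q ^ 3 - q * (q - 1) div 2"
    and "q dvd (L + q * (q - 1) div 2)"
    and "m = (L + q * (q - 1) div 2) div q"
    and "inj_on \<alpha> {1..m}" and "\<forall>i\<in>{1..m}. \<alpha> i \<noteq> 0"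
    and "\<forall>i\<in>{1..m}. \<forall>z\<in>{1..q}. P i z \<in> hermitian_affine q \<and> fst (P i z) = \<alpha> i"
    and "inj_on (\<lambda>(i, z). P i z) ({1..m} \<times> {1..q})"
    and "card (hermitian_affine q - {(0, 0)} - (\<lambda>(i, z). P i z) ` ({1..m} \<times> {1..q}))
           \<ge> L + X + T + (7 * q ^ 2 - 3 * q - 6) div 2 + 1"
    and "N = L + X + T + 3 * q ^ 2 - q - 2"
  shows "(\<forall>M \<ge> 1. \<exists>srand store qrand query answer decode.
            XSTPIR N M L X T srand store (qrand :: 'a list pmf) query answer decode)
         \<and> real L / real N = 1 - real (X + T + 3 * q ^ 2 - q - 2) / real N"
proof -
  interpret herm q "TYPE('a)" using assms(1,2) by unfold_locales auto
  have gg: "gg = q * (q - 1) div 2" unfolding gg_def ..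
  have q2: "2 * gg + q = q * q" using two_gg q_pos by (cases q) auto
  have qsq: "q ^ 2 = q * q" by (simp add: power2_eq_square)
  have qq2: "q * q \<ge> 2 * q" using mult_le_mono1[OF q_ge2, of q] by simp
  have qm: "q * m = L + gg"
    using assms(7,8) gg by simp
  define Pimg where "Pimg = (\<lambda>(i, z). P i z) ` ({1..m} \<times> {1..q})"
  define A0 where "A0 = H - {(0, 0)} - Pimg"
  have NA0: "N \<le> card A0"
  proof -
    have "3 * (q * q) - q - 2 \<le> (7 * (q * q) - 3 * q - 6) div 2 + 1" using qq2 q_ge2 by arith
    thus ?thesis using assms(13,14) unfolding A0_def Pimg_def qsq by simp
  qed
  obtain A where A: "A \<subseteq> A0" "card A = N" "finite A"
    using obtain_subset_with_card_n[OF NA0] by blast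
  obtain R where R: "bij_betw R {1..N} A" using ex_bij_betw_nat_finite_1[OF A(3)] A(2) by auto
  have Rinj: "inj_on R {1..N}" using R by (rule bij_betw_imp_inj_on)
  have RA: "R ` {1..N} = A" using R by (rule bij_betw_imp_surj_on)
  have RH: "R ` {1..N} \<subseteq> H" using RA A(1) unfolding A0_def by auto
  have Rx: "\<forall>n\<in>{1..N}. \<forall>i\<in>{1..m}. fst (R n) \<noteq> \<alpha> i"
  proof (intro ballI notI)
    fix n i assume n: "n \<in> {1..N}" and i: "i \<in> {1..m}" and e: "fst (R n) = \<alpha> i"
    have RnA: "R n \<in> A0" using RA A(1) n by auto
    let ?F = "fib (\<alpha> i ^ (q + 1))"
    let ?Y = "(\<lambda>z. snd (P i z)) ` {1..q}"
    have Ysub: "?Y \<subseteq> ?F"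
    proof
      fix y assume "y \<in> ?Y"
      then obtain z where z: "z \<in> {1..q}" "y = snd (P i z)" by auto
      have "P i z \<in> H" "fst (P i z) = \<alpha> i" using assms(11) i z by auto
      thus "y \<in> ?F" using z unfolding hermitian_affine_def fib_def by (cases "P i z") auto
    qed
    have injY: "inj_on (\<lambda>z. snd (P i z)) {1..q}"
    proof (rule inj_onI)
      fix z z' assume zz: "z \<in> {1..q}" "z' \<in> {1..q}" "snd (P i z) = snd (P i z')"
      moreover have "fst (P i z) = fst (P i z')" using assms(11) i zz by simp
      ultimately have "P i z = P i z'" by (simp add: prod_eq_iff)
      hence "(i, z) = (i, z')" using inj_onD[OF assms(12), of "(i, z)" "(i, z')"] i zz by simp
      thus "z = z'" by simp
    qed
    have "card ?Y = q" using card_image[OF injY] by simp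
    moreover have "card ?F = q" using card_fib[OF norm_in_Fq] .
    ultimately have YF: "?Y = ?F" using Ysub by (intro card_subset_eq) auto
    have "snd (R n) \<in> ?F" using RnA e unfolding A0_def hermitian_affine_def fib_def by (cases "R n") auto
    hence "snd (R n) \<in> ?Y" by (simp only: YF)
    then obtain z where z: "z \<in> {1..q}" "snd (R n) = snd (P i z)" by (rule imageE) auto
    have "fst (P i z) = \<alpha> i" using assms(11) i z by auto
    hence "R n = P i z" using e z by (simp add: prod_eq_iff)
    hence "R n \<in> Pimg" unfolding Pimg_def using i z by force
    thus False using RnA unfolding A0_def by auto
  qed
  have Lm: "L \<le> q * m" using qm by simp
  have Nbig: "q * m + ((X + 2 * gg - 1) + (T + 2 * gg - 1) + q) < N"
    using qm q2 qsq assms(3,4,14) q_ge2 by simp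
  interpret xst q "TYPE('a)" L X T m N \<alpha> P R
    using assms(3,4,9,11,12) Lm Rinj RH Rx Nbig by unfold_locales auto
  have part1: "\<forall>M \<ge> 1. \<exists>srand store qrand query answer decode.
            XSTPIR N M L X T srand store (qrand :: 'a list pmf) query answer decode"
    using scheme by blast
  have NK: "N = L + (X + T + 3 * q ^ 2 - q - 2)"
  proof -
    have "3 * (q * q) \<ge> q + 2" using qq2 q_ge2 by linarith
    thus ?thesis unfolding assms(14) qsq by arith
  qed
  have Npos: "N > 0" using Nbig by simp
  have "real L / real N = 1 - real (X + T + 3 * q ^ 2 - q - 2) / real N"
  proof -
    have "real N = real L + real (X + T + 3 * q ^ 2 - q - 2)" using NK by simp
    thus ?thesis using Npos by (simp add: field_simps)
  qed
  thus ?thesis using part1 by blast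
qed

end
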